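(* Let $\mathcal{M}:(0,\infty)\to(0,\infty)$ be the Mina margin map. Then: (1) $\mathcal{M}(s(x))=\mathcal{M}(x)$ for all $x\in(0,\infty)$; (2) $\mathcal{M}$ is continuous on $(0,\infty)$ and $\mathcal{M}(x)=\Big(\sum_{k\in\mathbb{Z}}\prod_{i=0}^k(c_i(x)-1)\Big)^{-1}\cdot x\sum_{k\in\mathbb{Z}}\prod_{i=0}^k(d_i(x)-1)$; (3) $\mathcal{M}((0,\infty))=[\lambda,\lambda^{-1}]$ for some $\lambda\in(0,0.999904]$ (this $\lambda$ is the infimum of Mina margins of positive ABMN solutions).
   Context: ABMN system on $\mathbb{Z}$: real variables $a_i,b_i\ge0$, $m_i,n_i$ with, for all $i$, $(a_i+b_i)(m_i+a_i)=a_im_{i+1}+b_im_{i-1}$, $(a_i+b_i)(n_i+b_i)=a_in_{i+1}+b_in_{i-1}$, $(a_i+b_i)^2=b_i(m_{i+1}-m_{i-1})$, $(a_i+b_i)^2=a_i(n_{i-1}-n_{i+1})$; positive if all $a_i,b_i>0$; $m_{\pm\infty},n_{\pm\infty}$ are the (real) limits as $i\to\pm\infty$; the Mina margin is $\frac{n_{-\infty}-n_\infty}{m_\infty-m_{-\infty}}$; the central ratio is $\frac{n_{-1}-n_0}{m_0-m_{-1}}$. A positive solution is standard if $m_{-\infty}=0$, $n_\infty=0$, $m_\infty=1$; for each $x>0$ there is exactly one standard solution $(a^{\rm st}(x),b^{\rm st}(x),m^{\rm st}(x),n^{\rm st}(x))$ with central ratio $x$. The Mina margin map is $\mathcal{M}(x)=n^{\rm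 st}_{-\infty}(x)$, the Mina margin of that solution. Functions: for $x>0$, $\omega=\sqrt{8x+1}$, $c(x)=\frac{(\omega+3)^2}{16}$, $d(x)=\frac{(\omega+3)^2}{8(\omega+1)}$, $s(x)=\frac{(\omega-1)^2}{4(\omega+7)}$; $s_{-1}(x)=1/s(1/x)$, $s_0(x)=x$, $s_i=s\circ s_{i-1}$, $s_{-i}=s_{-1}\circ s_{-(i-1)}$ ($i\in\mathbb{N}_+$); $c_j=c\circ s_j$, $d_j=d\circ s_j$. Product convention: $\prod_{i=0}^k h_i=h_0\cdots h_k$ for $k\ge0$, $=1$ for $k=-1$, $=h_{k+1}^{-1}\cdots h_{-1}^{-1}$ for $k\le-2$. *)

theory Defs
  imports "HOL-Analysis.Analysis"
begin

type_synonym zseq = "int \<Rightarrow> real"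

definition abmn :: "zseq \<Rightarrow> zseq \<Rightarrow> zseq \<Rightarrow> zseq \<Rightarrow> bool" where
  "abmn a b m n \<longleftrightarrow> (\<forall>i::int.
      a i \<ge> 0 \<and> b i \<ge> 0 \<and>
      (a i + b i) * (m i + a i) = a i * m (i+1) + b i * m (i-1) \<and>
      (a i + b i) * (n i + b i) = a i * n (i+1) + b i * n (i-1) \<and>
      (a i + b i)^2 = b i * (m (i+1) - m (i-1)) \<and>
      (a i + b i)^2 = a i * (n (i-1) - n (i+1)))"

definition abmn_positive :: "zseq \<Rightarrow> zseq \<Rightarrow> zseq \<Rightarrow> zseq \<Rightarrow> bool" where
  "abmn_positive a b m n \<longleftrightarrow> abmn a b m n \<and> (\<forall>i. a i > 0 \<and> b i > 0)"

definition has_limits :: "zseq \<Rightarrow> zseq \<Rightarrow> bool" where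
  "has_limits m n \<longleftrightarrow> (\<exists>L. (m \<longlongrightarrow> L) at_top) \<and> (\<exists>L. (m \<longlongrightarrow> L) at_bot)
      \<and> (\<exists>L. (n \<longlongrightarrow> L) at_top) \<and> (\<exists>L. (n \<longlongrightarrow> L) at_bot)"

definition lim_top :: "zseq \<Rightarrow> real" where "lim_top f = Lim at_top f"
definition lim_bot :: "zseq \<Rightarrow> real" where "lim_bot f = Lim at_bot f"

definition mina_margin :: "zseq \<Rightarrow> zseq \<Rightarrow> real" where
  "mina_margin m n = (lim_bot n - lim_top n) / (lim_top m - lim_bot m)"

definition central_ratio :: "zseq \<Rightarrow> zseq \<Rightarrow> real" where
  "central_ratio m n = (n (-1) - n 0) / (m 0 - m (-1))"

definition abmn_standard :: "zseq \<Rightarrow> zseq \<Rightarrow> zseq \<Rightarrow> zseq \<Rightarrow> bool" where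
  "abmn_standard a b m n \<longleftrightarrow> abmn_positive a b m n \<and> has_limits m n \<and>
     (m \<longlongrightarrow> 0) at_bot \<and> (n \<longlongrightarrow> 0) at_top \<and> (m \<longlongrightarrow> 1) at_top"

definition standard_sol :: "real \<Rightarrow> zseq \<times> zseq \<times> zseq \<times> zseq" where
  "standard_sol x = (THE (a,b,m,n). abmn_standard a b m n \<and> central_ratio m n = x)"

definition mina_map :: "real \<Rightarrow> real" where
  "mina_map x = (case standard_sol x of (a,b,m,n) \<Rightarrow> mina_margin m n)"

definition omega :: "real \<Rightarrow> real" where "omega x = sqrt (8*x + 1)"
definition cfun :: "real \<Rightarrow> real" where "cfun x = (omega x + 3)^2 / 16"
definition dfun :: "real \<Rightarrow> real" where "dfun x = (omega x + 3)^2 / (8 * (omega x + 1))"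
definition sfun :: "real \<Rightarrow> real" where "sfun x = (omega x - 1)^2 / (4 * (omega x + 7))"
definition sfun_inv :: "real \<Rightarrow> real" where "sfun_inv x = 1 / sfun (1 / x)"

definition s_iter :: "int \<Rightarrow> real \<Rightarrow> real" where
  "s_iter j x = (if j \<ge> 0 then (sfun ^^ nat j) x else (sfun_inv ^^ nat (-j)) x)"

definition c_iter :: "int \<Rightarrow> real \<Rightarrow> real" where "c_iter j x = cfun (s_iter j x)"
definition d_iter :: "int \<Rightarrow> real \<Rightarrow> real" where "d_iter j x = dfun (s_iter j x)"

definition prodZ :: "(int \<Rightarrow> real) \<Rightarrow> int \<Rightarrow> real" where
  "prodZ h k = (if k \<ge> 0 then (\<Prod>i\<in>{0..k}. h i)
               else if k = -1 then 1
               else (\<Prod>i\<in>{k+1..-1}. inverse (h i)))"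

end

theory Submission
  imports Defs
begin


lemma omega_gt1: "y > 0 \<Longrightarrow> omega y > 1"
  unfolding omega_def by (simp add: real_less_rsqrt)

lemma omega_sq: "y \<ge> -1/8 \<Longrightarrow> (omega y)^2 = 8*y+1"
  unfolding omega_def by simp

lemma y_omega: "y \<ge> -1/8 \<Longrightarrow> y = ((omega y)^2 - 1)/8"
  using omega_sq[of y] by simp

lemma omega_mono: "y \<le> z \<Longrightarrow> omega y \<le> omega z"
  unfolding omega_def by simp

lemma omega_strict_mono: "y < z \<Longrightarrow> omega y < omega z"
  unfolding omega_def by simp

definition G :: "real \<Rightarrow> real" where "G w = (w - 1)^2 / (4*(w+7))"

lemma sfun_G: "sfun y = G (omega y)" unfolding sfun_def G_def ..

lemma G_strict_mono: assumes "1 \<le> u" "u < v" shows "G u < G v"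
proof -
  have id: "(v-1)^2*(u+7) - (u-1)^2 * (v+7) = (v-u)*((u-1)*(v-1) + 8*(u-1+(v-1)))"
    by (simp add: algebra_simps power2_eq_square)
  have "0 < (v-u)*((u-1)*(v-1) + 8*(u-1+(v-1)))"
    using assms by (intro mult_pos_pos) (auto intro!: add_nonneg_pos)
  hence "(u-1)^2 * (v+7) < (v-1)^2*(u+7)" using id by linarith
  thus ?thesis unfolding G_def using assms
    by (simp add: divide_simps) (simp add: algebra_simps)
qed

lemma G_mono: "1 \<le> u \<Longrightarrow> u \<le> v \<Longrightarrow> G u \<le> G v"
  using G_strict_mono[of u v] by (cases "u = v") auto

lemma sfun_strict_mono: "0 < y \<Longrightarrow> y < z \<Longrightarrow> sfun y < sfun z"
  unfolding sfun_G using omega_gt1[of y] omega_strict_mono[of y z] by (intro G_strict_mono) auto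

lemma sfun_mono: "0 < y \<Longrightarrow> y \<le> z \<Longrightarrow> sfun y \<le> sfun z"
  using sfun_strict_mono[of y z] by (cases "y = z") auto

lemma sfun_pos: "y > 0 \<Longrightarrow> sfun y > 0"
  unfolding sfun_def using omega_gt1[of y] by (simp add: divide_simps)

lemma sfun_le: assumes "y > 0" shows "sfun y \<le> y / 9"
proof -
  define w where "w = omega y"
  have w1: "w > 1" using omega_gt1[OF assms] w_def by simp
  have y: "y = (w^2-1)/8" using y_omega[of y] assms w_def by simp
  have "9*(w-1)^2*8 \<le> (w^2-1)*(4*(w+7))"
  proof -
    have "(w^2-1)*(4*(w+7)) - 9*(w-1)^2*8 = 4*(w-1)*(w-5)^2"
      by (simp add: algebra_simps power2_eq_square)
    moreover have "4*(w-1)*(w-5)^2 \<ge> 0" using w1 by simp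
    ultimately show ?thesis by linarith
  qed
  hence "(w-1)^2/(4*(w+7)) \<le> ((w^2-1)/8)/9" using w1
    by (simp add: divide_simps)
  moreover have "sfun y = (w-1)^2/(4*(w+7))" unfolding sfun_def w_def ..
  moreover have "((w^2-1)/8)/9 = y/9" using y by simp
  ultimately show ?thesis by linarith
qed

lemma omega_inv_sfun: assumes "y > 0"
  shows "omega (1 / sfun y) = (omega y + 15) / (omega y - 1)"
proof -
  define w where "w = omega y"
  have w1: "w > 1" using omega_gt1[OF assms] w_def by simp
  have "8 / sfun y + 1 = ((w + 15)/(w-1))^2"
    unfolding sfun_def w_def[symmetric] using w1
    by (simp add: divide_simps) (simp add: algebra_simps power2_eq_square)
  moreover have "(w + 15)/(w-1) > 0" using w1 by simp
  ultimately have "sqrt (8 / sfun y + 1) = (w + 15)/(w-1)" using w1 by simp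
  thus ?thesis unfolding omega_def w_def by simp
qed

lemma sfun_inv_sfun_key: assumes "y > 0" shows "sfun (1 / sfun y) = 1 / y"
proof -
  define w where "w = omega y"
  have w1: "w > 1" using omega_gt1[OF assms] w_def by simp
  have y: "y = (w^2-1)/8" using y_omega[of y] assms w_def by simp
  have ww: "w*w - 1 > 0" using w1 by (metis diff_gt_0_iff_gt less_1_mult less_trans zero_less_one)
  have "G ((w + 15) / (w - 1)) = 1 / ((w^2-1)/8)"
    unfolding G_def using w1 ww by (simp add: divide_simps power2_eq_square) (simp add: algebra_simps)
  moreover have "sfun (1 / sfun y) = G ((w + 15) / (w - 1))"
    using sfun_G[of "1 / sfun y"] omega_inv_sfun[OF assms] w_def by simp
  moreover have "1 / ((w^2-1)/8) = 1/y" using y assms by (simp add: field_simps)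
  ultimately show ?thesis by linarith
qed

lemma sfun_inv_pos: "y > 0 \<Longrightarrow> sfun_inv y > 0"
  unfolding sfun_inv_def using sfun_pos[of "1/y"] by simp

lemma sfun_inv_sfun: "y > 0 \<Longrightarrow> sfun_inv (sfun y) = y"
  unfolding sfun_inv_def using sfun_inv_sfun_key by simp

lemma sfun_sfun_inv: "y > 0 \<Longrightarrow> sfun (sfun_inv y) = y"
  unfolding sfun_inv_def using sfun_inv_sfun_key[of "1/y"] by simp

lemma sfun_inv_strict_mono: assumes "0 < y" "y < z" shows "sfun_inv y < sfun_inv z"
proof (rule ccontr)
  assume "\<not> ?thesis"
  hence "sfun_inv z \<le> sfun_inv y" by simp
  hence "sfun (sfun_inv z) \<le> sfun (sfun_inv y)"
    using sfun_mono sfun_inv_pos assms by force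
  thus False using sfun_sfun_inv assms by simp
qed

lemma sfun_inv_mono: "0 < y \<Longrightarrow> y \<le> z \<Longrightarrow> sfun_inv y \<le> sfun_inv z"
  using sfun_inv_strict_mono[of y z] by (cases "y = z") auto

lemma sfun_inv_ge: "y > 0 \<Longrightarrow> sfun_inv y \<ge> 9 * y"
  using sfun_le[of "sfun_inv y"] sfun_sfun_inv[of y] sfun_inv_pos[of y] by simp


lemma funpow_sfun_pos: "x > 0 \<Longrightarrow> (sfun ^^ n) x > 0"
  by (induction n) (auto simp: sfun_pos)

lemma funpow_sfun_inv_pos: "x > 0 \<Longrightarrow> (sfun_inv ^^ n) x > 0"
  by (induction n) (auto simp: sfun_inv_pos)

lemma s_iter_pos: "x > 0 \<Longrightarrow> s_iter j x > 0"
  unfolding s_iter_def by (auto simp: funpow_sfun_pos funpow_sfun_inv_pos)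

lemma s_iter_0 [simp]: "s_iter 0 x = x"
  unfolding s_iter_def by simp

lemma s_iter_succ: assumes "x > 0" shows "s_iter (j+1) x = sfun (s_iter j x)"
proof (cases "j \<ge> 0")
  case True
  hence "nat (j+1) = Suc (nat j)" by simp
  thus ?thesis using True unfolding s_iter_def by simp
next
  case False
  show ?thesis
  proof (cases "j = -1")
    case True
    thus ?thesis unfolding s_iter_def using sfun_sfun_inv[OF assms] by simp
  next
    case F2: False
    hence "nat (-j) = Suc (nat (-(j+1)))" using False by simp
    thus ?thesis using False F2 unfolding s_iter_def
      by (simp add: sfun_sfun_inv funpow_sfun_inv_pos assms)
  qed
qed

lemma s_iter_pred: assumes "x > 0" shows "s_iter (j-1) x = sfun_inv (s_iter j x)"
  using s_iter_succ[OF assms, of "j-1"] sfun_inv_sfun[OF s_iter_pos[OF assms, of "j-1"]] by simp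

lemma s_iter_shift: assumes "x > 0" shows "s_iter j (sfun x) = s_iter (j+1) x"
proof (induction j rule: int_induct[where k=0])
  case base
  then show ?case using s_iter_succ[OF assms, of 0] by simp
next
  case (step1 i)
  then show ?case using s_iter_succ[OF assms, of "i+1"] s_iter_succ[OF sfun_pos[OF assms], of i] by simp
next
  case (step2 i)
  then show ?case using s_iter_pred[OF sfun_pos[OF assms], of i] s_iter_pred[OF assms, of "i+1"] by simp
qed

lemma funpow_sfun_mono: "0 < x \<Longrightarrow> x \<le> x' \<Longrightarrow> (sfun ^^ n) x \<le> (sfun ^^ n) x'"
  by (induction n) (auto intro!: sfun_mono funpow_sfun_pos)

lemma funpow_sfun_inv_mono: "0 < x \<Longrightarrow> x \<le> x' \<Longrightarrow> (sfun_inv ^^ n) x \<le> (sfun_inv ^^ n) x'"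
  by (induction n) (auto intro!: sfun_inv_mono funpow_sfun_inv_pos)

lemma s_iter_mono: "0 < x \<Longrightarrow> x \<le> x' \<Longrightarrow> s_iter j x \<le> s_iter j x'"
  unfolding s_iter_def by (auto intro!: funpow_sfun_mono funpow_sfun_inv_mono)

lemma funpow_sfun_le: "0 < x \<Longrightarrow> (sfun ^^ n) x \<le> x / 9^n"
proof (induction n)
  case 0 then show ?case by simp
next
  case (Suc n)
  have "(sfun ^^ Suc n) x \<le> (sfun ^^ n) x / 9" using sfun_le funpow_sfun_pos Suc by simp
  also have "\<dots> \<le> x / 9^n / 9" using Suc by simp
  finally show ?case by simp
qed

lemma funpow_sfun_inv_ge: "0 < x \<Longrightarrow> (sfun_inv ^^ n) x \<ge> 9^n * x"
proof (induction n)
  case 0 then show ?case by simp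
next
  case (Suc n)
  have "9 * (9^n * x) \<le> 9 * (sfun_inv ^^ n) x" using Suc by simp
  also have "\<dots> \<le> (sfun_inv ^^ Suc n) x" using sfun_inv_ge funpow_sfun_inv_pos Suc by simp
  finally show ?case by simp
qed

lemma s_iter_nat: "s_iter (int n) x = (sfun ^^ n) x" unfolding s_iter_def by simp
lemma s_iter_neg: "n > 0 \<Longrightarrow> s_iter (- int n) x = (sfun_inv ^^ n) x" unfolding s_iter_def by simp

lemma s_iter_decr: assumes "x > 0" shows "s_iter (j+1) x \<le> s_iter j x"
  using s_iter_succ[OF assms] sfun_le[OF s_iter_pos[OF assms, of j]] s_iter_pos[OF assms, of j] by simp

lemma s_iter_antimono: assumes "x > 0" "j \<le> j'" shows "s_iter j' x \<le> s_iter j x"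
proof -
  have "\<forall>n. s_iter (j + int n) x \<le> s_iter j x"
  proof
    fix n show "s_iter (j + int n) x \<le> s_iter j x"
    proof (induction n)
      case (Suc n)
      have "s_iter (j + int (Suc n)) x = s_iter ((j + int n) + 1) x" by (simp add: algebra_simps)
      also have "\<dots> \<le> s_iter (j + int n) x" by (rule s_iter_decr[OF assms(1)])
      finally show ?case using Suc by simp
    qed simp
  qed
  from this[rule_format, of "nat (j'-j)"] show ?thesis using assms by simp
qed


lemma lin_m: fixes a b m mp mm :: real
  assumes ab: "a > 0" "b > 0"
    and e1: "(a + b) * (m + a) = a * mp + b * mm"
    and e3: "(a + b)^2 = b * (mp - mm)"
  shows "mp - m = 2*a + b" "m - mm = a^2/b"
proof -
  have "(a+b)*(mp - (m + 2*a + b)) = (a * mp + b * mm - (a + b) * (m + a)) + (b * (mp - mm) - (a + b)^2)"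
    by (simp add: algebra_simps power2_eq_square)
  hence "(a+b)*(mp - (m + 2*a + b)) = 0" using e1 e3 by simp
  thus A: "mp - m = 2*a + b" using ab by simp
  have "b * (m - mm) = b*(mp - mm) - b*(mp - m)" by (simp add: algebra_simps)
  also have "\<dots> = a^2" using e3 A by (simp add: algebra_simps power2_eq_square)
  finally show "m - mm = a^2/b" using ab by (simp add: field_simps)
qed

lemma lin_n: fixes a b n np nm :: real
  assumes ab: "a > 0" "b > 0"
    and e2: "(a + b) * (n + b) = a * np + b * nm"
    and e4: "(a + b)^2 = a * (nm - np)"
  shows "nm - n = a + 2*b" "n - np = b^2/a"
proof -
  have "(a+b)*(nm - (n + a + 2*b)) = (a * np + b * nm - (a + b) * (n + b)) + (a * (nm - np) - (a + b)^2)"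
    by (simp add: algebra_simps power2_eq_square)
  hence "(a+b)*(nm - (n + a + 2*b)) = 0" using e2 e4 by simp
  thus A: "nm - n = a + 2*b" using ab by simp
  have "a * (n - np) = a*(nm - np) - a*(nm - n)" by (simp add: algebra_simps)
  also have "\<dots> = b^2" using e4 A by (simp add: algebra_simps power2_eq_square)
  finally show "n - np = b^2/a" using ab by (simp add: field_simps)
qed

lemma key_t: assumes "t > 0"
  shows "omega ((t+2)/t^2) = (t+4)/t"
    "sfun ((t+2)/t^2) = 1/(t*(2*t+1))"
    "cfun ((t+2)/t^2) - 1 = (2*t+1)/t^2"
    "dfun ((t+2)/t^2) - 1 = 1/(t*(t+2))"
proof -
  have "8*((t+2)/t^2) + 1 = ((t+4)/t)^2" using assms
    by (simp add: divide_simps) (simp add: algebra_simps power2_eq_square)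
  moreover have "(t+4)/t > 0" using assms by simp
  ultimately show om: "omega ((t+2)/t^2) = (t+4)/t" unfolding omega_def using assms by simp
  show "sfun ((t+2)/t^2) = 1/(t*(2*t+1))" unfolding sfun_def om using assms
    by (simp add: divide_simps) (simp add: algebra_simps power2_eq_square)
  show "cfun ((t+2)/t^2) - 1 = (2*t+1)/t^2" unfolding cfun_def om using assms
    by (simp add: divide_simps) (simp add: algebra_simps power2_eq_square)
  show "dfun ((t+2)/t^2) - 1 = 1/(t*(t+2))" unfolding dfun_def om using assms
    by (simp add: divide_simps) (simp add: algebra_simps power2_eq_square)
qed

lemma pos_sol_facts: assumes "abmn_positive a b m n"
  shows "m (i+1) - m i = 2 * a i + b i" "m i - m (i-1) = (a i)^2 / b i"
        "n (i-1) - n i = a i + 2 * b i" "n i - n (i+1) = (b i)^2 / a i"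
        "a i > 0" "b i > 0"
proof -
  have ab: "a i > 0" "b i > 0" using assms unfolding abmn_positive_def by auto
  have A: "\<forall>i. a i \<ge> 0 \<and> b i \<ge> 0 \<and>
      (a i + b i) * (m i + a i) = a i * m (i+1) + b i * m (i-1) \<and>
      (a i + b i) * (n i + b i) = a i * n (i+1) + b i * n (i-1) \<and>
      (a i + b i)^2 = b i * (m (i+1) - m (i-1)) \<and>
      (a i + b i)^2 = a i * (n (i-1) - n (i+1))"
    using assms unfolding abmn_positive_def abmn_def by blast
  have e1: "(a i + b i) * (m i + a i) = a i * m (i+1) + b i * m (i-1)" using A by blast
  have e2: "(a i + b i) * (n i + b i) = a i * n (i+1) + b i * n (i-1)" using A by blast
  have e3: "(a i + b i)^2 = b i * (m (i+1) - m (i-1))" using A by blast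
  have e4: "(a i + b i)^2 = a i * (n (i-1) - n (i+1))" using A by blast
  note e = e1 e2 e3 e4
  show "m (i+1) - m i = 2 * a i + b i" "m i - m (i-1) = (a i)^2 / b i"
    using lin_m[OF ab e(1) e(3)] by auto
  show "n (i-1) - n i = a i + 2 * b i" "n i - n (i+1) = (b i)^2 / a i"
    using lin_n[OF ab e(2) e(4)] by auto
  show "a i > 0" "b i > 0" by (fact ab)+
qed

definition cr_at :: "zseq \<Rightarrow> zseq \<Rightarrow> int \<Rightarrow> real" where
  "cr_at a b i = (a i + 2 * b i) * b i / (a i)^2"

lemma cr_at_t: "(a::real) > 0 \<Longrightarrow> b > 0 \<Longrightarrow> (a + 2*b)*b/a^2 = (a/b + 2)/(a/b)^2"
  by (simp add: divide_simps) (simp add: algebra_simps power2_eq_square)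

lemma cr_at_pos: assumes "abmn_positive a b m n" shows "cr_at a b i > 0"
  using pos_sol_facts[OF assms, of i] unfolding cr_at_def by simp

lemma cr_at_alt: assumes "abmn_positive a b m n"
  shows "cr_at a b i = (n (i-1) - n i) / (m i - m (i-1))"
proof -
  note f = pos_sol_facts[OF assms, of i]
  have "(n (i-1) - n i) / (m i - m (i-1)) = (a i + 2*b i) / ((a i)^2 / b i)" using f by simp
  also have "\<dots> = cr_at a b i" unfolding cr_at_def using f by (simp add: field_simps)
  finally show ?thesis by simp
qed

lemma central_ratio_cr: assumes "abmn_positive a b m n"
  shows "central_ratio m n = cr_at a b 0"
  using cr_at_alt[OF assms, of 0] unfolding central_ratio_def by simp

lemma cr_step: assumes P: "abmn_positive a b m n"
  shows "cr_at a b (i+1) = sfun (cr_at a b i)"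
proof -
  note f = pos_sol_facts[OF P, of i] 
  note g = pos_sol_facts[OF P, of "i+1"]
  define t where "t = a i / b i"
  have t: "t > 0" using f t_def by simp
  have "cr_at a b i = (t+2)/t^2" unfolding cr_at_def t_def using cr_at_t f by simp
  hence "sfun (cr_at a b i) = 1/(t*(2*t+1))" using key_t[OF t] by simp
  also have "\<dots> = (b i)^2/(a i * (2 * a i + b i))" unfolding t_def using f
    by (simp add: divide_simps) (simp add: algebra_simps power2_eq_square)
  also have "\<dots> = (n i - n (i+1)) / (m (i+1) - m i)"
    using f by (simp add: divide_simps)
  also have "\<dots> = cr_at a b (i+1)" using cr_at_alt[OF P, of "i+1"] by simp
  finally show ?thesis by simp
qed

lemma cr_iter: assumes P: "abmn_positive a b m n"
  shows "cr_at a b i = s_iter i (cr_at a b 0)"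
proof (induction i rule: int_induct[where k=0])
  case base then show ?case by simp
next
  case (step1 i)
  then show ?case using cr_step[OF P, of i] s_iter_succ[OF cr_at_pos[OF P, of 0], of i] by simp
next
  case (step2 i)
  have "cr_at a b i = sfun (cr_at a b (i-1))" using cr_step[OF P, of "i-1"] by simp
  hence "cr_at a b (i-1) = sfun_inv (cr_at a b i)" using sfun_inv_sfun cr_at_pos[OF P] by simp
  then show ?case using step2 s_iter_pred[OF cr_at_pos[OF P, of 0], of i] by simp
qed

lemma mu_ratio: assumes P: "abmn_positive a b m n"
  shows "m (i+1) - m i = (m i - m (i-1)) * (cfun (cr_at a b i) - 1)"
proof -
  note f = pos_sol_facts[OF P, of i]
  define t where "t = a i / b i"
  have t: "t > 0" using f t_def by simp
  have "cr_at a b i = (t+2)/t^2" unfolding cr_at_def t_def using cr_at_t f by simp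
  hence "(m i - m (i-1)) * (cfun (cr_at a b i) - 1) = (a i)^2/b i * ((2*t+1)/t^2)" using key_t[OF t] f by simp
  also have "\<dots> = 2 * a i + b i" unfolding t_def using f
    by (simp add: divide_simps) (simp add: algebra_simps power2_eq_square)
  finally show ?thesis using f by simp
qed

lemma nu_ratio: assumes P: "abmn_positive a b m n"
  shows "n i - n (i+1) = (n (i-1) - n i) * (dfun (cr_at a b i) - 1)"
proof -
  note f = pos_sol_facts[OF P, of i]
  define t where "t = a i / b i"
  have t: "t > 0" using f t_def by simp
  have "cr_at a b i = (t+2)/t^2" unfolding cr_at_def t_def using cr_at_t f by simp
  hence "(n (i-1) - n i) * (dfun (cr_at a b i) - 1) = (a i + 2 * b i) * (1/(t*(t+2)))" using key_t[OF t] f by simp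
  also have "\<dots> = (b i)^2 / a i" unfolding t_def using f
    by (simp add: divide_simps) (simp add: algebra_simps power2_eq_square)
  finally show ?thesis using f by simp
qed

lemma prodZ_m1 [simp]: "prodZ h (-1) = 1" unfolding prodZ_def by simp

lemma prodZ_succ: assumes "\<And>i. h i \<noteq> 0" shows "prodZ h (k+1) = prodZ h k * h (k+1)"
proof -
  consider "k \<ge> 0" | "k = -1" | "k \<le> -2" by linarith
  then show ?thesis
  proof cases
    case 1
    have "{0..k+1} = insert (k+1) {0..k}" using 1 by auto
    thus ?thesis using 1 unfolding prodZ_def by (simp add: mult.commute)
  next
    case 2 thus ?thesis unfolding prodZ_def by simp
  next
    case 3
    show ?thesis
    proof (cases "k = -2")
      case True thus ?thesis unfolding prodZ_def using assms by simp
    next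
      case False
      have "{k+1..-1} = insert (k+1) {k+2..-1}" using 3 by auto
      hence "prodZ h k = inverse (h (k+1)) * (\<Prod>i\<in>{k+2..-1}. inverse (h i))"
        unfolding prodZ_def using 3 by simp
      moreover have "prodZ h (k+1) = (\<Prod>i\<in>{k+2..-1}. inverse (h i))"
        unfolding prodZ_def using 3 False by (simp add: add.assoc)
      ultimately show ?thesis using assms by simp
    qed
  qed
qed

lemma prodZ_pos: assumes "\<And>i. h i > 0" shows "prodZ h k > 0"
  unfolding prodZ_def using assms by (auto intro!: prod_pos)

lemma mu_prod: assumes P: "abmn_positive a b m n"
  shows "m (k+1) - m k = (m 0 - m (-1)) * prodZ (\<lambda>i. c_iter i (cr_at a b 0) - 1) k"
proof -
  have cpos: "c_iter i (cr_at a b 0) - 1 \<noteq> 0" for i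
    using mu_ratio[OF P, of i] pos_sol_facts[OF P, of i] pos_sol_facts[OF P, of "i-1"]
    unfolding c_iter_def cr_iter[OF P, of i, symmetric] by auto
  show ?thesis
  proof (induction k rule: int_induct[where k="-1"])
    case base then show ?case by simp
  next
    case (step1 i)
    then show ?case using mu_ratio[OF P, of "i+1"] prodZ_succ[of "\<lambda>i. c_iter i (cr_at a b 0) - 1", OF cpos, of i]
      unfolding c_iter_def cr_iter[OF P, of "i+1", symmetric] by simp
  next
    case (step2 i)
    have "m (i+1) - m i = (m i - m (i-1)) * (cfun (cr_at a b i) - 1)" by (rule mu_ratio[OF P])
    moreover have "prodZ (\<lambda>i. c_iter i (cr_at a b 0) - 1) i = prodZ (\<lambda>i. c_iter i (cr_at a b 0) - 1) (i-1) * (cfun (cr_at a b i) - 1)"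
      using prodZ_succ[of "\<lambda>i. c_iter i (cr_at a b 0) - 1", OF cpos, of "i-1"] by (simp add: c_iter_def cr_iter[OF P, of i])
    moreover have "cfun (cr_at a b i) - 1 = c_iter i (cr_at a b 0) - 1" by (simp add: c_iter_def cr_iter[OF P, of i])
    ultimately show ?case using step2 cpos[of i] by simp
  qed
qed

lemma nu_prod: assumes P: "abmn_positive a b m n"
  shows "n k - n (k+1) = (n (-1) - n 0) * prodZ (\<lambda>i. d_iter i (cr_at a b 0) - 1) k"
proof -
  have dpos: "d_iter i (cr_at a b 0) - 1 \<noteq> 0" for i
    using nu_ratio[OF P, of i] pos_sol_facts[OF P, of i] pos_sol_facts[OF P, of "i+1"]
    unfolding d_iter_def cr_iter[OF P, of i, symmetric] by auto
  show ?thesis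
  proof (induction k rule: int_induct[where k="-1"])
    case base then show ?case by simp
  next
    case (step1 i)
    then show ?case using nu_ratio[OF P, of "i+1"] prodZ_succ[of "\<lambda>i. d_iter i (cr_at a b 0) - 1", OF dpos, of i]
      unfolding d_iter_def cr_iter[OF P, of "i+1", symmetric] by simp
  next
    case (step2 i)
    have "n i - n (i+1) = (n (i-1) - n i) * (dfun (cr_at a b i) - 1)" by (rule nu_ratio[OF P])
    moreover have "prodZ (\<lambda>i. d_iter i (cr_at a b 0) - 1) i = prodZ (\<lambda>i. d_iter i (cr_at a b 0) - 1) (i-1) * (dfun (cr_at a b i) - 1)"
      using prodZ_succ[of "\<lambda>i. d_iter i (cr_at a b 0) - 1", OF dpos, of "i-1"] by (simp add: d_iter_def cr_iter[OF P, of i])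
    moreover have "dfun (cr_at a b i) - 1 = d_iter i (cr_at a b 0) - 1" by (simp add: d_iter_def cr_iter[OF P, of i])
    ultimately show ?case using step2 dpos[of i] by simp
  qed
qed


lemma int_tendsto_top_seq: fixes g :: "int \<Rightarrow> real"
  assumes "(\<lambda>N. g (int N)) \<longlonglongrightarrow> L" shows "(g \<longlongrightarrow> L) at_top"
proof (rule tendstoI)
  fix e :: real assume "e > 0"
  from tendstoD[OF assms this] obtain N0 where N0: "\<And>n. n \<ge> N0 \<Longrightarrow> dist (g (int n)) L < e"
    by (auto simp: eventually_sequentially)
  show "\<forall>\<^sub>F k in at_top. dist (g k) L < e"
    unfolding eventually_at_top_linorder
  proof (intro exI allI impI)
    fix k assume "k \<ge> int N0"
    hence "nat k \<ge> N0" "int (nat k) = k" by auto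
    thus "dist (g k) L < e" using N0 by metis
  qed
qed

lemma int_tendsto_bot_seq: fixes g :: "int \<Rightarrow> real"
  assumes "(\<lambda>N. g (- int N)) \<longlonglongrightarrow> L" shows "(g \<longlongrightarrow> L) at_bot"
proof (rule tendstoI)
  fix e :: real assume "e > 0"
  from tendstoD[OF assms this] obtain N0 where N0: "\<And>n. n \<ge> N0 \<Longrightarrow> dist (g (- int n)) L < e"
    by (auto simp: eventually_sequentially)
  show "\<forall>\<^sub>F k in at_bot. dist (g k) L < e"
    unfolding eventually_at_bot_linorder
  proof (intro exI allI impI)
    fix k assume "k \<le> - int N0"
    hence "nat (-k) \<ge> N0" "- int (nat (-k)) = k" by auto
    thus "dist (g k) L < e" using N0 by metis
  qed
qed

lemma filterlim_neg_int_sequentially: "filterlim (\<lambda>N. - int N) at_bot sequentially"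
  unfolding filterlim_at_bot eventually_sequentially
  by (intro allI, rule_tac x="nat (-Z)" in exI) auto

lemma tendsto_top_int_seq: "(g \<longlongrightarrow> L) at_top \<Longrightarrow> (\<lambda>N. g (int N)) \<longlonglongrightarrow> L"
  using filterlim_compose filterlim_int_sequentially by blast

lemma tendsto_bot_int_seq: "(g \<longlongrightarrow> L) at_bot \<Longrightarrow> (\<lambda>N. g (- int N)) \<longlonglongrightarrow> L"
  using filterlim_compose[OF _ filterlim_neg_int_sequentially] by blast

lemma telescope_sum: fixes g :: "int \<Rightarrow> real"
  shows "(\<Sum>k\<in>{B..<B+int n}. g (k+1) - g k) = g (B + int n) - g B"
proof (induction n)
  case 0 then show ?case by simp
next
  case (Suc n)
  have "{B..<B+int (Suc n)} = insert (B + int n) {B..<B+int n}" by auto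
  then show ?case using Suc by (simp add: algebra_simps)
qed

lemma telescope_sym: fixes g :: "int \<Rightarrow> real"
  shows "(\<Sum>k\<in>{-int N..<int N}. g (k+1) - g k) = g (int N) - g (- int N)"
  using telescope_sum[of g "- int N" "2*N"] by simp

lemma finite_int_bounded: assumes "finite (F :: int set)" shows "\<exists>N::nat. F \<subseteq> {-int N..<int N}"
proof -
  define M where "M = Max (abs ` insert 0 F)"
  have "\<forall>k\<in>F. \<bar>k\<bar> \<le> M" using assms unfolding M_def by (auto intro!: Max_ge)
  hence "F \<subseteq> {-int (nat M + 1)..<int (nat M + 1)}" by force
  thus ?thesis by blast
qed

lemma incr_le_lim: fixes g :: "int \<Rightarrow> real"
  assumes mono: "\<And>k. g k \<le> g (k+1)" and lim: "(g \<longlongrightarrow> A) at_top"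
  shows "g k \<le> A"
proof -
  have A: "g k \<le> g (k + int n)" for n
  proof (induction n)
    case (Suc n)
    have "g (k + int n) \<le> g (k + int n + 1)" by (rule mono)
    also have "k + int n + 1 = k + int (Suc n)" by simp
    finally show ?case using Suc by simp
  qed simp
  have "g k \<le> g j" if "j \<ge> k" for j using A[of "nat (j-k)"] that by simp
  hence "eventually (\<lambda>j. g k \<le> g j) at_top" unfolding eventually_at_top_linorder by blast
  thus ?thesis using tendsto_lowerbound[OF lim] by simp
qed

lemma incr_ge_lim: fixes g :: "int \<Rightarrow> real"
  assumes mono: "\<And>k. g k \<le> g (k+1)" and lim: "(g \<longlongrightarrow> B) at_bot"
  shows "B \<le> g k"
proof -
  have A: "g (k - int n) \<le> g k" for n
  proof (induction n)
    case (Suc n)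
    have "g (k - int (Suc n)) \<le> g (k - int (Suc n) + 1)" by (rule mono)
    also have "k - int (Suc n) + 1 = k - int n" by simp
    finally show ?case using Suc by simp
  qed simp
  have "g j \<le> g k" if "j \<le> k" for j using A[of "nat (k-j)"] that by simp
  hence "eventually (\<lambda>j. g j \<le> g k) at_bot" unfolding eventually_at_bot_linorder by blast
  thus ?thesis using tendsto_upperbound[OF lim] by simp
qed

lemma telescope_has_sum: fixes g :: "int \<Rightarrow> real"
  assumes mono: "\<And>k. g k \<le> g (k+1)" and top: "(g \<longlongrightarrow> A) at_top" and bot: "(g \<longlongrightarrow> B) at_bot"
  shows "((\<lambda>k. g (k+1) - g k) has_sum (A - B)) UNIV"
proof -
  define f where "f k = g (k+1) - g k" for k
  have fnn: "f k \<ge> 0" for k using mono unfolding f_def by simp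
  have le: "sum f F \<le> A - B" if fin: "finite F" for F
  proof -
    obtain N where N: "F \<subseteq> {-int N..<int N}" using finite_int_bounded[OF fin] by blast
    have "sum f F \<le> sum f {-int N..<int N}" using N fnn by (intro sum_mono2) auto
    also have "\<dots> = g (int N) - g (- int N)" unfolding f_def by (rule telescope_sym)
    also have "\<dots> \<le> A - B" using incr_le_lim[OF mono top] incr_ge_lim[OF mono bot]
      by (simp add: diff_mono)
    finally show ?thesis .
  qed
  have bdd: "bdd_above (sum f ` {F. F \<subseteq> UNIV \<and> finite F})"
    using le by (auto intro!: bdd_aboveI)
  have hs: "(f has_sum (SUP F\<in>{F. finite F \<and> F\<subseteq>UNIV}. sum f F)) UNIV"
    by (rule nonneg_bdd_above_has_sum) (use fnn bdd in auto)
  define S where "S = (SUP F\<in>{F. finite F \<and> F\<subseteq>UNIV}. sum f F)"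
  have "S \<le> A - B" unfolding S_def using le by (intro cSUP_least) auto
  moreover have "A - B \<le> S"
  proof -
    have lim: "(\<lambda>N. g (int N) - g (- int N)) \<longlonglongrightarrow> A - B"
      by (intro tendsto_diff tendsto_top_int_seq tendsto_bot_int_seq top bot)
    have "g (int N) - g (- int N) \<le> S" for N
    proof -
      have "g (int N) - g (- int N) = sum f {-int N..<int N}" unfolding f_def by (rule telescope_sym[symmetric])
      also have "\<dots> \<le> S" unfolding S_def using bdd by (intro cSUP_upper) (auto simp: conj_commute)
      finally show ?thesis .
    qed
    thus ?thesis using tendsto_upperbound[OF lim] by simp
  qed
  ultimately have "S = A - B" by simp
  thus ?thesis using hs unfolding S_def f_def by simp
qed

lemma int_has_sum_split: fixes f :: "int \<Rightarrow> real"
  assumes fnn: "\<And>k. f k \<ge> 0"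
    and su: "summable (\<lambda>n. f (int n))" and sv: "summable (\<lambda>n. f (- int n - 1))"
  shows "(f has_sum ((\<Sum>n. f (int n)) + (\<Sum>n. f (- int n - 1)))) UNIV"
proof -
  have h1: "(f has_sum (\<Sum>n. f (int n))) (range int)"
    using has_sum_reindex[of int UNIV f] sums_nonneg_imp_has_sum[OF summable_sums[OF su]] fnn
    by (simp add: o_def)
  have inj2: "inj (\<lambda>n::nat. - int n - 1)" by (auto simp: inj_def)
  have h2: "(f has_sum (\<Sum>n. f (- int n - 1))) (range (\<lambda>n::nat. - int n - 1))"
    using has_sum_reindex[OF inj2, of f] sums_nonneg_imp_has_sum[OF summable_sums[OF sv]] fnn
    by (simp add: o_def)
  have U: "range int \<union> range (\<lambda>n::nat. - int n - 1) = UNIV"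
  proof -
    have "k \<in> range int \<union> range (\<lambda>n::nat. - int n - 1)" for k :: int
    proof (cases "k \<ge> 0")
      case True thus ?thesis by (auto intro!: image_eqI[of _ _ "nat k"])
    next
      case False thus ?thesis by (auto intro!: image_eqI[of _ _ "nat (-k-1)"])
    qed
    thus ?thesis by blast
  qed
  have D: "range int \<inter> range (\<lambda>n::nat. - int n - 1) = {}" by auto
  show ?thesis using has_sum_Un_disjoint[OF h1 h2 D] U by simp
qed


definition PC :: "real \<Rightarrow> int \<Rightarrow> real" where "PC x k = prodZ (\<lambda>i. c_iter i x - 1) k"
definition PD :: "real \<Rightarrow> int \<Rightarrow> real" where "PD x k = prodZ (\<lambda>i. d_iter i x - 1) k"
definition Cs :: "real \<Rightarrow> real" where "Cs x = (\<Sum>\<^sub>\<infinity>k\<in>(UNIV::int set). PC x k)"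
definition Ds :: "real \<Rightarrow> real" where "Ds x = (\<Sum>\<^sub>\<infinity>k\<in>(UNIV::int set). PD x k)"
definition Fm :: "real \<Rightarrow> real" where "Fm x = inverse (Cs x) * x * Ds x"

lemma margin_formula:
  assumes P: "abmn_positive a b m n" and L: "has_limits m n"
  defines "x \<equiv> central_ratio m n"
  shows "PC x summable_on UNIV" "PD x summable_on UNIV" "mina_margin m n = Fm x"
    "(PC x has_sum (lim_top m - lim_bot m) / (m 0 - m (-1))) UNIV"
    "(PD x has_sum (lim_bot n - lim_top n) / (n (-1) - n 0)) UNIV"
proof -
  obtain Lt Lb Nt Nb where lim: "(m \<longlongrightarrow> Lt) at_top" "(m \<longlongrightarrow> Lb) at_bot"
    "(n \<longlongrightarrow> Nt) at_top" "(n \<longlongrightarrow> Nb) at_bot"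
    using L unfolding has_limits_def by blast
  have lims: "lim_top m = Lt" "lim_bot m = Lb" "lim_top n = Nt" "lim_bot n = Nb"
    unfolding lim_top_def lim_bot_def using lim by (auto intro!: tendsto_Lim)
  have x: "x = cr_at a b 0" unfolding x_def by (rule central_ratio_cr[OF P])
  define mu where "mu = m 0 - m (-1)"
  define nu where "nu = n (-1) - n 0"
  have mupos: "mu > 0" unfolding mu_def using pos_sol_facts[OF P, of 0] by simp
  have nupos: "nu > 0" unfolding nu_def using pos_sol_facts[OF P, of 0] by simp
  have xmu: "x = nu / mu" unfolding x_def central_ratio_def mu_def nu_def ..
  have mmono: "m k \<le> m (k+1)" for k using pos_sol_facts[OF P, of k] by simp
  have h1: "((\<lambda>k. m (k+1) - m k) has_sum (Lt - Lb)) UNIV"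
    by (rule telescope_has_sum[OF mmono lim(1,2)])
  hence "((\<lambda>k. mu * PC x k) has_sum (Lt - Lb)) UNIV"
    using mu_prod[OF P] unfolding x PC_def mu_def by simp
  hence hC: "(PC x has_sum (Lt - Lb) / mu) UNIV" by (subst (asm) has_sum_cmult_right_iff) (use mupos in auto)
  have nmono: "- n k \<le> - n (k+1)" for k using pos_sol_facts[OF P, of "k+1"] by simp
  have h2: "((\<lambda>k. - n (k+1) - (- n k)) has_sum (- Nt - (- Nb))) UNIV"
    by (rule telescope_has_sum[where g="\<lambda>k. - n k", OF nmono]) (use lim(3,4) in \<open>auto intro: tendsto_minus\<close>)
  hence "((\<lambda>k. nu * PD x k) has_sum (Nb - Nt)) UNIV"
    using nu_prod[OF P] unfolding x PD_def nu_def by simp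
  hence hD: "(PD x has_sum (Nb - Nt) / nu) UNIV" by (subst (asm) has_sum_cmult_right_iff) (use nupos in auto)
  show "PC x summable_on UNIV" "PD x summable_on UNIV" using hC hD by (auto simp: summable_on_def)
  show "(PC x has_sum (lim_top m - lim_bot m) / (m 0 - m (-1))) UNIV" using hC lims mu_def by simp
  show "(PD x has_sum (lim_bot n - lim_top n) / (n (-1) - n 0)) UNIV" using hD lims nu_def by simp
  have e: "Cs x = (Lt - Lb) / mu" "Ds x = (Nb - Nt) / nu" unfolding Cs_def Ds_def using hC hD by (auto intro: infsumI)
  have "Fm x = inverse ((Lt - Lb)/mu) * (nu/mu) * ((Nb - Nt)/nu)" unfolding Fm_def e using xmu by simp
  also have "\<dots> = (Nb - Nt)/(Lt - Lb)" using mupos nupos by (cases "Lt - Lb = 0") (simp_all add: field_simps)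
  finally show "mina_margin m n = Fm x" unfolding mina_margin_def lims by simp
qed


lemma t_inj: fixes t u :: real assumes "t > 0" "u > 0" "(t+2)/t^2 = (u+2)/u^2" shows "t = u"
proof -
  have "(t+2)*u^2 = (u+2)*t^2" using assms by (simp add: field_simps)
  hence "(u-t)*(t*u + 2*u + 2*t) = 0" by (simp add: algebra_simps power2_eq_square)
  moreover have "t*u + 2*u + 2*t > 0" using assms by (simp add: add_pos_pos)
  ultimately show ?thesis by simp
qed

lemma const_step_zero: fixes D :: "int \<Rightarrow> real"
  assumes step: "\<And>k. D (k+1) = D k" and lim: "(D \<longlongrightarrow> 0) F" and F: "F \<noteq> bot"
  shows "D k = 0"
proof -
  have "D k = D 0" for k
  proof (induction k rule: int_induct[where k=0])
    case (step2 i) then show ?case using step[of "i-1"] by simp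
  qed (use step in auto)
  hence "D = (\<lambda>_. D 0)" by auto
  hence "((\<lambda>_. D 0) \<longlongrightarrow> 0) F" using lim by simp
  hence "D 0 = 0" using F tendsto_const_iff by blast
  thus ?thesis using \<open>D = _\<close> by metis
qed

lemma std_lims: assumes "abmn_standard a b m n"
  shows "lim_top m = 1" "lim_bot m = 0" "lim_top n = 0"
  using assms unfolding abmn_standard_def lim_top_def lim_bot_def by (auto intro!: tendsto_Lim)

lemma std_unique:
  assumes S1: "abmn_standard a b m n" and S2: "abmn_standard a' b' m' n'"
    and cr: "central_ratio m n = central_ratio m' n'"
  shows "a = a' \<and> b = b' \<and> m = m' \<and> n = n'"
proof -
  have P1: "abmn_positive a b m n" and L1: "has_limits m n" using S1 unfolding abmn_standard_def by auto
  have P2: "abmn_positive a' b' m' n'" and L2: "has_limits m' n'" using S2 unfolding abmn_standard_def by auto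
  define x where "x = central_ratio m n"
  have x1: "cr_at a b 0 = x" using central_ratio_cr[OF P1] x_def by simp
  have x2: "cr_at a' b' 0 = x" using central_ratio_cr[OF P2] x_def cr by simp
  have h1: "(PC x has_sum 1 / (m 0 - m (-1))) UNIV"
    using margin_formula(4)[OF P1 L1] std_lims[OF S1] x_def by simp
  have h2: "(PC x has_sum 1 / (m' 0 - m' (-1))) UNIV"
    using margin_formula(4)[OF P2 L2] std_lims[OF S2] x_def cr by simp
  have "1 / (m 0 - m (-1)) = 1 / (m' 0 - m' (-1))" using has_sum_unique[OF h1 h2] .
  hence mu: "m 0 - m (-1) = m' 0 - m' (-1)" by simp
  have dm: "m (k+1) - m k = m' (k+1) - m' k" for k
    using mu_prod[OF P1, of k] mu_prod[OF P2, of k] x1 x2 mu by simp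
  have crk: "cr_at a b k = cr_at a' b' k" for k using cr_iter[OF P1, of k] cr_iter[OF P2, of k] x1 x2 by simp
  have tk: "a k / b k = a' k / b' k" for k
  proof -
    note f1 = pos_sol_facts[OF P1, of k] and f2 = pos_sol_facts[OF P2, of k]
    have "(a k / b k + 2)/(a k / b k)^2 = (a' k / b' k + 2)/(a' k / b' k)^2"
      using crk[of k] cr_at_t[of "a k" "b k"] cr_at_t[of "a' k" "b' k"] f1 f2 unfolding cr_at_def by simp
    thus ?thesis using t_inj f1 f2 by simp
  qed
  have bk: "b k = b' k" for k
  proof -
    note f1 = pos_sol_facts[OF P1, of k] and f2 = pos_sol_facts[OF P2, of k]
    have "(2 * (a k / b k) + 1) * b k = (2 * (a' k / b' k) + 1) * b' k"
      using dm[of k] f1 f2 by (simp add: field_simps)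
    moreover have "2 * (a k / b k) + 1 > 0" using f1 by (simp add: add_pos_pos)
    ultimately show ?thesis using tk[of k] by simp
  qed
  have ak: "a k = a' k" for k
  proof -
    note f1 = pos_sol_facts[OF P1, of k] and f2 = pos_sol_facts[OF P2, of k]
    show ?thesis using tk[of k] bk[of k] f1 f2 by (simp add: field_simps)
  qed
  have A: "a = a'" "b = b'" using ak bk by auto
  have mm: "m k - m' k = 0" for k
  proof (rule const_step_zero[where D="\<lambda>k. m k - m' k" and F=at_bot])
    show "m (k+1) - m' (k+1) = m k - m' k" for k using dm[of k] by simp
    show "((\<lambda>k. m k - m' k) \<longlongrightarrow> 0) at_bot"
      using S1 S2 unfolding abmn_standard_def by (auto dest: tendsto_diff)
  qed simp
  have nn: "n k - n' k = 0" for k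
  proof (rule const_step_zero[where D="\<lambda>k. n k - n' k" and F=at_top])
    show "n (k+1) - n' (k+1) = n k - n' k" for k
      using pos_sol_facts(4)[OF P1, of k] pos_sol_facts(4)[OF P2, of k] A by simp
    show "((\<lambda>k. n k - n' k) \<longlongrightarrow> 0) at_top"
      using S1 S2 unfolding abmn_standard_def by (auto dest: tendsto_diff)
  qed simp
  show ?thesis using A mm nn by auto
qed


lemma cfun_gt1: "y > 0 \<Longrightarrow> cfun y > 1"
proof -
  assume "y > 0" hence w: "omega y > 1" by (rule omega_gt1)
  hence "(omega y + 3)^2 > 4^2" by (intro power_strict_mono) auto
  thus ?thesis unfolding cfun_def by simp
qed

lemma dfun_gt1: "y > 0 \<Longrightarrow> dfun y > 1"
proof -
  assume "y > 0" hence w: "omega y > 1" by (rule omega_gt1)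
  have "(omega y + 3)^2 - 8*(omega y + 1) = (omega y - 1)^2" by (simp add: algebra_simps power2_eq_square)
  moreover have "(omega y - 1)^2 > 0" using w by simp
  ultimately have "(omega y + 3)^2 > 8*(omega y + 1)" by linarith
  thus ?thesis unfolding dfun_def using w by (simp add: divide_simps)
qed

lemma c_small: assumes "y > 0" shows "cfun y - 1 \<le> y * (y + 2)"
proof -
  define w where "w = omega y"
  have w1: "w > 1" using omega_gt1[OF assms] w_def by simp
  have y: "y = (w^2-1)/8" using y_omega[of y] assms w_def by simp
  have "cfun y - 1 = (w+7)*(w-1)/16" unfolding cfun_def w_def[symmetric] by (simp add: field_simps power2_eq_square)
  also have "\<dots> \<le> ((w^2-1)/8) * ((w^2-1)/8 + 2)"
  proof -
    have "((w^2-1)/8) * ((w^2-1)/8 + 2) - (w+7)*(w-1)/16 = (w-1)^2*(w^2+2*w+13)/64"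
      by (simp add: field_simps power2_eq_square)
    moreover have "(w-1)^2*(w^2+2*w+13)/64 \<ge> 0" using w1 by simp
    ultimately show ?thesis by linarith
  qed
  also have "\<dots> = y * (y+2)" by (simp only: y[symmetric])
  finally show ?thesis .
qed

lemma d_small: assumes "y > 0" shows "dfun y - 1 \<le> y^2"
proof -
  define w where "w = omega y"
  have w1: "w > 1" using omega_gt1[OF assms] w_def by simp
  have y: "y = (w^2-1)/8" using y_omega[of y] assms w_def by simp
  have "dfun y - 1 = (w-1)^2/(8*(w+1))" unfolding dfun_def w_def[symmetric] using w1
    by (simp add: field_simps power2_eq_square)
  also have "\<dots> \<le> ((w^2-1)/8)^2"
  proof -
    have "((w^2-1)/8)^2 - (w-1)^2/(8*(w+1)) = (w-1)^2*((w+1)^3 - 8)/(64*(w+1))"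
      using w1 by (simp add: field_simps power2_eq_square) (simp add: algebra_simps power3_eq_cube)
    moreover have "(w+1)^3 \<ge> 2^3" using w1 by (intro power_mono) auto
    hence "(w-1)^2*((w+1)^3 - 8)/(64*(w+1)) \<ge> 0" using w1 by simp
    ultimately show ?thesis by linarith
  qed
  also have "\<dots> = y^2" by (simp only: y[symmetric])
  finally show ?thesis .
qed

lemma c_large: assumes "y > 0" shows "cfun y - 1 \<ge> y / 2"
proof -
  define w where "w = omega y"
  have w1: "w > 1" using omega_gt1[OF assms] w_def by simp
  have y: "y = (w^2-1)/8" using y_omega[of y] assms w_def by simp
  have "cfun y - 1 = (w+7)*(w-1)/16" unfolding cfun_def w_def[symmetric] by (simp add: field_simps power2_eq_square)
  moreover have "(w+7)*(w-1)/16 \<ge> ((w^2-1)/8)/2" using w1 by (simp add: field_simps power2_eq_square)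
  moreover have "((w^2-1)/8)/2 = y/2" by (simp only: y[symmetric])
  ultimately show ?thesis by linarith
qed

lemma d_large: assumes "y \<ge> 45" shows "dfun y - 1 \<ge> 2"
proof -
  define w where "w = omega y"
  have "w \<ge> omega 45" unfolding w_def using assms by (rule omega_mono)
  moreover have "omega 45 = 19" unfolding omega_def by simp
  ultimately have w: "w \<ge> 19" by simp
  have "dfun y - 1 = (w-1)^2/(8*(w+1))" unfolding dfun_def w_def[symmetric] using w
    by (simp add: field_simps power2_eq_square)
  moreover have "(w-1)^2 \<ge> 16*(w+1)"
  proof -
    have "(w-1)^2 - 16*(w+1) = (w-19)*(w+1) + 4" by (simp add: algebra_simps power2_eq_square)
    moreover have "(w-19)*(w+1) \<ge> 0" using w by simp
    ultimately show ?thesis by linarith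
  qed
  moreover have "(w-1)^2/(8*(w+1)) \<ge> 2"
    using \<open>(w-1)^2 \<ge> 16*(w+1)\<close> w by (simp add: divide_simps)
  ultimately show ?thesis by simp
qed

lemma prodZ_summable:
  fixes h :: "int \<Rightarrow> real"
  assumes pos: "\<And>i. h i > 0"
    and fw: "\<And>n. n \<ge> N1 \<Longrightarrow> h (int n + 1) \<le> 1/2"
    and bw: "\<And>n. n \<ge> N2 \<Longrightarrow> h (- int n - 1) \<ge> 2"
  shows "summable (\<lambda>n. prodZ h (int n))" "summable (\<lambda>n. prodZ h (- int n - 1))"
    "(prodZ h has_sum ((\<Sum>n. prodZ h (int n)) + (\<Sum>n. prodZ h (- int n - 1)))) UNIV"
proof -
  have nz: "\<And>i. h i \<noteq> 0" using pos by (metis less_irrefl)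
  have pp: "prodZ h k > 0" for k by (rule prodZ_pos[OF pos])
  show s1: "summable (\<lambda>n. prodZ h (int n))"
  proof (rule summable_ratio_test[where c="1/2" and N=N1])
    fix n assume "n \<ge> N1"
    have "prodZ h (int n + 1) = prodZ h (int n) * h (int n + 1)"
      using prodZ_succ[where h=h, OF nz, where k="int n"] by simp
    also have "\<dots> \<le> prodZ h (int n) * (1/2)" using fw[OF \<open>n \<ge> N1\<close>] pp[of "int n"]
      by (intro mult_left_mono) auto
    finally show "norm (prodZ h (int (Suc n))) \<le> 1/2 * norm (prodZ h (int n))"
      unfolding of_nat_Suc add.commute[of 1]
      using pp by (simp add: abs_of_pos)
  qed simp
  show s2: "summable (\<lambda>n. prodZ h (- int n - 1))"
  proof (rule summable_ratio_test[where c="1/2" and N=N2])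
    fix n assume "n \<ge> N2"
    have e: "- int (Suc n) - 1 + 1 = - int n - 1" by simp
    have "prodZ h (- int n - 1) = prodZ h (- int (Suc n) - 1) * h (- int n - 1)"
      using prodZ_succ[where h=h, OF nz, where k="- int (Suc n) - 1"] unfolding e .
    hence "prodZ h (- int (Suc n) - 1) = prodZ h (- int n - 1) / h (- int n - 1)"
      using pos[of "- int n - 1"] by (simp add: field_simps)
    also have "\<dots> \<le> prodZ h (- int n - 1) / 2" using bw[OF \<open>n \<ge> N2\<close>] pp[of "- int n - 1"]
      by (intro divide_left_mono) auto
    finally show "norm (prodZ h (- int (Suc n) - 1)) \<le> 1/2 * norm (prodZ h (- int n - 1))"
      using pp by (simp add: abs_of_pos)
  qed simp
  show "(prodZ h has_sum ((\<Sum>n. prodZ h (int n)) + (\<Sum>n. prodZ h (- int n - 1)))) UNIV"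
    by (rule int_has_sum_split[OF _ s1 s2]) (use pp in \<open>simp add: less_imp_le\<close>)
qed

lemma s_iter_fw_small: assumes "x > 0" shows "\<exists>N. \<forall>n\<ge>N. s_iter (int n + 1) x \<le> 1/5"
proof -
  obtain N where N: "5 * x < 9^N" using real_arch_pow[of 9 "5*x"] by auto
  have "s_iter (int n + 1) x \<le> 1/5" if "n \<ge> N" for n
  proof -
    have "int n + 1 = int (Suc n)" by simp
    hence "s_iter (int n + 1) x = (sfun ^^ Suc n) x" using s_iter_nat[of "Suc n" x] by metis
    also have "\<dots> \<le> x / 9^(Suc n)" by (rule funpow_sfun_le[OF assms])
    also have "\<dots> \<le> x / 9^N" using assms that by (intro divide_left_mono power_increasing) auto
    also have "\<dots> \<le> 1/5" using N by (simp add: divide_simps)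
    finally show ?thesis .
  qed
  thus ?thesis by blast
qed

lemma s_iter_bw_large: assumes "x > 0" shows "\<exists>N. \<forall>n\<ge>N. s_iter (- int n - 1) x \<ge> 45"
proof -
  obtain N where N: "45 / x < 9^N" using real_arch_pow[of 9 "45/x"] by auto
  have "s_iter (- int n - 1) x \<ge> 45" if "n \<ge> N" for n
  proof -
    have e: "- int n - 1 = - int (Suc n)" by simp
    have "45 \<le> 9^N * x" using N assms by (simp add: field_simps)
    also have "\<dots> \<le> 9^(Suc n) * x" using assms that by (intro mult_right_mono power_increasing) auto
    also have "\<dots> \<le> (sfun_inv ^^ Suc n) x" by (rule funpow_sfun_inv_ge[OF assms])
    also have "\<dots> = s_iter (- int n - 1) x" unfolding e by (rule s_iter_neg[symmetric]) simp
    finally show ?thesis .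
  qed
  thus ?thesis by blast
qed

lemma PC_pos: "x > 0 \<Longrightarrow> PC x k > 0"
  unfolding PC_def c_iter_def using cfun_gt1 s_iter_pos by (intro prodZ_pos) auto

lemma PD_pos: "x > 0 \<Longrightarrow> PD x k > 0"
  unfolding PD_def d_iter_def using dfun_gt1 s_iter_pos by (intro prodZ_pos) auto

lemma PC_summable: assumes "x > 0"
  shows "summable (\<lambda>n. PC x (int n))" "summable (\<lambda>n. PC x (- int n - 1))"
    "(PC x has_sum ((\<Sum>n. PC x (int n)) + (\<Sum>n. PC x (- int n - 1)))) UNIV"
proof -
  obtain N1 where N1: "\<forall>n\<ge>N1. s_iter (int n + 1) x \<le> 1/5" using s_iter_fw_small[OF assms] by blast
  obtain N2 where N2: "\<forall>n\<ge>N2. s_iter (- int n - 1) x \<ge> 45" using s_iter_bw_large[OF assms] by blast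
  have pos: "c_iter i x - 1 > 0" for i unfolding c_iter_def using cfun_gt1 s_iter_pos assms by simp
  have fw: "c_iter (int n + 1) x - 1 \<le> 1/2" if "n \<ge> N1" for n
  proof -
    define y where "y = s_iter (int n + 1) x"
    have y: "y > 0" "y \<le> 1/5" using N1 that s_iter_pos assms y_def by auto
    have "c_iter (int n + 1) x - 1 \<le> y * (y+2)" unfolding c_iter_def y_def[symmetric] by (rule c_small[OF y(1)])
    also have "\<dots> \<le> (1/5) * (1/5 + 2)" using y by (intro mult_mono) auto
    finally show ?thesis by simp
  qed
  have bw: "c_iter (- int n - 1) x - 1 \<ge> 2" if "n \<ge> N2" for n
  proof -
    define y where "y = s_iter (- int n - 1) x"
    have y: "y > 0" "y \<ge> 45" using N2 that s_iter_pos assms y_def by auto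
    have "2 \<le> y / 2" using y by simp
    also have "\<dots> \<le> c_iter (- int n - 1) x - 1" unfolding c_iter_def y_def[symmetric] by (rule c_large[OF y(1)])
    finally show ?thesis .
  qed
  note r = prodZ_summable[of "\<lambda>i. c_iter i x - 1", OF pos fw bw]
  show "summable (\<lambda>n. PC x (int n))" "summable (\<lambda>n. PC x (- int n - 1))"
    "(PC x has_sum ((\<Sum>n. PC x (int n)) + (\<Sum>n. PC x (- int n - 1)))) UNIV"
    using r unfolding PC_def[abs_def] by auto
qed

lemma PD_summable: assumes "x > 0"
  shows "summable (\<lambda>n. PD x (int n))" "summable (\<lambda>n. PD x (- int n - 1))"
    "(PD x has_sum ((\<Sum>n. PD x (int n)) + (\<Sum>n. PD x (- int n - 1)))) UNIV"
proof -
  obtain N1 where N1: "\<forall>n\<ge>N1. s_iter (int n + 1) x \<le> 1/5" using s_iter_fw_small[OF assms] by blast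
  obtain N2 where N2: "\<forall>n\<ge>N2. s_iter (- int n - 1) x \<ge> 45" using s_iter_bw_large[OF assms] by blast
  have pos: "d_iter i x - 1 > 0" for i unfolding d_iter_def using dfun_gt1 s_iter_pos assms by simp
  have fw: "d_iter (int n + 1) x - 1 \<le> 1/2" if "n \<ge> N1" for n
  proof -
    define y where "y = s_iter (int n + 1) x"
    have y: "y > 0" "y \<le> 1/5" using N1 that s_iter_pos assms y_def by auto
    have "d_iter (int n + 1) x - 1 \<le> y^2" unfolding d_iter_def y_def[symmetric] by (rule d_small[OF y(1)])
    also have "\<dots> \<le> (1/5)^2" using y by (intro power_mono) auto
    finally show ?thesis by (simp add: power2_eq_square)
  qed
  have bw: "d_iter (- int n - 1) x - 1 \<ge> 2" if "n \<ge> N2" for n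
    unfolding d_iter_def using N2 that by (intro d_large) auto
  note r = prodZ_summable[of "\<lambda>i. d_iter i x - 1", OF pos fw bw]
  show "summable (\<lambda>n. PD x (int n))" "summable (\<lambda>n. PD x (- int n - 1))"
    "(PD x has_sum ((\<Sum>n. PD x (int n)) + (\<Sum>n. PD x (- int n - 1)))) UNIV"
    using r unfolding PD_def[abs_def] by auto
qed

lemma Cs_pos: "x > 0 \<Longrightarrow> Cs x > 0"
proof -
  assume x: "x > 0"
  have "Cs x = (\<Sum>n. PC x (int n)) + (\<Sum>n. PC x (- int n - 1))"
    unfolding Cs_def using PC_summable(3)[OF x] by (rule infsumI)
  moreover have "(\<Sum>n. PC x (int n)) > 0" using PC_summable(1)[OF x] PC_pos[OF x]
    by (intro suminf_pos) auto
  moreover have "(\<Sum>n. PC x (- int n - 1)) > 0" using PC_summable(2)[OF x] PC_pos[OF x]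
    by (intro suminf_pos) auto
  ultimately show ?thesis by simp
qed

lemma Ds_pos: "x > 0 \<Longrightarrow> Ds x > 0"
proof -
  assume x: "x > 0"
  have "Ds x = (\<Sum>n. PD x (int n)) + (\<Sum>n. PD x (- int n - 1))"
    unfolding Ds_def using PD_summable(3)[OF x] by (rule infsumI)
  moreover have "(\<Sum>n. PD x (int n)) > 0" using PD_summable(1)[OF x] PD_pos[OF x]
    by (intro suminf_pos) auto
  moreover have "(\<Sum>n. PD x (- int n - 1)) > 0" using PD_summable(2)[OF x] PD_pos[OF x]
    by (intro suminf_pos) auto
  ultimately show ?thesis by simp
qed


lemma t_of_y: assumes "y > 0" defines "t \<equiv> 4 / (omega y - 1)"
  shows "t > 0" "(t+2)/t^2 = y"
proof -
  define w where "w = omega y"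
  have w1: "w > 1" using omega_gt1[OF assms(1)] w_def by simp
  have y: "y = (w^2-1)/8" using y_omega[of y] assms w_def by simp
  show "t > 0" unfolding t_def w_def[symmetric] using w1 by simp
  have "(t+2)/t^2 = (w^2-1)/8" unfolding t_def w_def[symmetric] using w1
    by (simp add: field_simps power2_eq_square)
  thus "(t+2)/t^2 = y" by (simp only: y[symmetric])
qed

lemma aux_split: fixes t c X Y :: real assumes "t > 0"
  shows "c * (X / (t*(t+2)) - Y / (t*(2*t+1))) = c / (t*(t+2)*(2*t+1)) * (X*(2*t+1) - (t+2)*Y)"
proof -
  have a: "t*(t+2) \<noteq> 0" "t*(2*t+1) \<noteq> 0" "t*(t+2)*(2*t+1) \<noteq> 0" using assms by (auto simp: add_pos_pos)
  have "c * (X / (t*(t+2)) - Y / (t*(2*t+1))) = c * ((X*(2*t+1)) / (t*(t+2)*(2*t+1)) - (Y*(t+2)) / (t*(t+2)*(2*t+1)))"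
    using a by (simp add: mult.commute mult.left_commute)
  also have "\<dots> = c / (t*(t+2)*(2*t+1)) * (X*(2*t+1) - (t+2)*Y)" by (simp add: diff_divide_distrib[symmetric] algebra_simps)
  finally show ?thesis .
qed

definition tt :: "real \<Rightarrow> int \<Rightarrow> real" where "tt x k = 4 / (omega (s_iter k x) - 1)"

lemma tt_facts: assumes "x > 0"
  shows "tt x k > 0" "(tt x k + 2)/(tt x k)^2 = s_iter k x"
    "c_iter k x - 1 = (2 * tt x k + 1)/(tt x k)^2"
    "d_iter k x - 1 = 1/(tt x k * (tt x k + 2))"
    "s_iter (k+1) x = 1/(tt x k * (2 * tt x k + 1))"
proof -
  note T = t_of_y[OF s_iter_pos[OF assms, of k]]
  show t: "tt x k > 0" "(tt x k + 2)/(tt x k)^2 = s_iter k x" unfolding tt_def using T by auto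
  show "c_iter k x - 1 = (2 * tt x k + 1)/(tt x k)^2" unfolding c_iter_def using key_t(3)[OF t(1)] t(2) by simp
  show "d_iter k x - 1 = 1/(tt x k * (tt x k + 2))" unfolding d_iter_def using key_t(4)[OF t(1)] t(2) by simp
  show "s_iter (k+1) x = 1/(tt x k * (2 * tt x k + 1))" using s_iter_succ[OF assms, of k] key_t(2)[OF t(1)] t(2) by simp
qed

lemma PC_step: assumes "x > 0" shows "PC x (k+1) = PC x k * (c_iter (k+1) x - 1)"
proof -
  have "c_iter i x - 1 \<noteq> 0" for i using cfun_gt1[OF s_iter_pos[OF assms, of i]] unfolding c_iter_def by simp
  thus ?thesis unfolding PC_def using prodZ_succ[of "\<lambda>i. c_iter i x - 1"] by simp
qed

lemma PD_step: assumes "x > 0" shows "PD x (k+1) = PD x k * (d_iter (k+1) x - 1)"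
proof -
  have "d_iter i x - 1 \<noteq> 0" for i using dfun_gt1[OF s_iter_pos[OF assms, of i]] unfolding d_iter_def by simp
  thus ?thesis unfolding PD_def using prodZ_succ[of "\<lambda>i. d_iter i x - 1"] by simp
qed

lemma PC_m1 [simp]: "PC x (-1) = 1" unfolding PC_def by simp
lemma PD_m1 [simp]: "PD x (-1) = 1" unfolding PD_def by simp

lemma R_identity: assumes x: "x > 0"
  shows "x * PD x (k-1) * (2 * tt x k + 1) = (tt x k + 2) * PC x k"
proof -
  define E where "E k = x * PD x (k-1) * (2 * tt x k + 1) - (tt x k + 2) * PC x k" for k
  have step: "E (k+1) = (2 * tt x (k+1) + 1) / (tt x k * (tt x k + 2) * (2 * tt x k + 1)) * E k" for k
  proof -
    define t where "t = tt x k"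
    define t' where "t' = tt x (k+1)"
    have t: "t > 0" "t' > 0" using tt_facts(1)[OF x] t_def t'_def by auto
    have Q: "PD x k = PD x (k-1) / (t*(t+2))"
      using PD_step[OF x, of "k-1"] tt_facts(4)[OF x, of k] t_def by simp
    have P: "PC x (k+1) = PC x k * (2*t'+1)/t'^2"
      using PC_step[OF x, of k] tt_facts(3)[OF x, of "k+1"] t'_def by simp
    have rel: "(t'+2)/t'^2 = 1/(t*(2*t+1))"
      using tt_facts(2)[OF x, of "k+1"] tt_facts(5)[OF x, of k] t_def t'_def by simp
    have "E (k+1) = x * PD x k * (2*t'+1) - (t'+2) * (PC x k * (2*t'+1)/t'^2)"
      unfolding E_def t'_def[symmetric] using P by simp
    also have "\<dots> = (2*t'+1) * (x * PD x k - PC x k * ((t'+2)/t'^2))" by (simp add: algebra_simps)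
    also have "\<dots> = (2*t'+1) * (x * (PD x (k-1) / (t*(t+2))) - PC x k / (t*(2*t+1)))" unfolding rel Q by simp
    also have "\<dots> = (2*t'+1) / (t * (t + 2) * (2 * t + 1)) * (x * PD x (k-1) * (2 * t + 1) - (t + 2) * PC x k)"
      using aux_split[OF t(1), of "2*t'+1" "x * PD x (k-1)" "PC x k"] by simp
    finally show ?thesis unfolding E_def t_def t'_def by simp
  qed
  have nz: "(2 * tt x (k+1) + 1) / (tt x k * (tt x k + 2) * (2 * tt x k + 1)) \<noteq> 0" for k
    using tt_facts(1)[OF x, of k] tt_facts(1)[OF x, of "k+1"] by (simp add: add_pos_pos)
  have E0: "E 0 = 0"
  proof -
    have "PC x 0 = (2 * tt x 0 + 1)/(tt x 0)^2" using PC_step[OF x, of "-1"] tt_facts(3)[OF x, of 0] by simp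
    moreover have "(tt x 0 + 2)/(tt x 0)^2 = x" using tt_facts(2)[OF x, of 0] by simp
    ultimately show ?thesis unfolding E_def using tt_facts(1)[OF x, of 0]
      by (simp add: field_simps power2_eq_square)
  qed
  have "E k = 0"
  proof (induction k rule: int_induct[where k=0])
    case base then show ?case by (rule E0)
  next
    case (step1 i) then show ?case using step[of i] by simp
  next
    case (step2 i) then show ?case using step[of "i-1"] nz[of "i-1"] by simp
  qed
  thus ?thesis unfolding E_def by simp
qed


lemma conv_m: fixes a b m mp mm :: real
  assumes ab: "a > 0" "b > 0" and A: "mp - m = 2*a + b" and B: "m - mm = a^2/b"
  shows "(a + b) * (m + a) = a * mp + b * mm" "(a + b)^2 = b * (mp - mm)"
proof -
  have mp: "mp = m + 2*a + b" using A by simp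
  have mm: "b * mm = b * m - a^2" using B ab by (simp add: field_simps)
  show "(a + b) * (m + a) = a * mp + b * mm" unfolding mp using mm by (simp add: algebra_simps power2_eq_square)
  have "b * (mp - mm) = b * mp - b * mm" by (simp add: algebra_simps)
  also have "\<dots> = (a+b)^2" unfolding mp mm by (simp add: algebra_simps power2_eq_square)
  finally show "(a + b)^2 = b * (mp - mm)" by simp
qed

lemma conv_n: fixes a b n np nm :: real
  assumes ab: "a > 0" "b > 0" and A: "nm - n = a + 2*b" and B: "n - np = b^2/a"
  shows "(a + b) * (n + b) = a * np + b * nm" "(a + b)^2 = a * (nm - np)"
proof -
  have nm: "nm = n + a + 2*b" using A by simp
  have np: "a * np = a * n - b^2" using B ab by (simp add: field_simps)
  show "(a + b) * (n + b) = a * np + b * nm" unfolding nm using np by (simp add: algebra_simps power2_eq_square)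
  have "a * (nm - np) = a * nm - a * np" by (simp add: algebra_simps)
  also have "\<dots> = (a+b)^2" unfolding nm np by (simp add: algebra_simps power2_eq_square)
  finally show "(a + b)^2 = a * (nm - np)" by simp
qed

definition Uc :: "real \<Rightarrow> real" where "Uc x = (\<Sum>n. PC x (int n))"
definition Vc :: "real \<Rightarrow> real" where "Vc x = (\<Sum>n. PC x (- int n - 1))"
definition Ud :: "real \<Rightarrow> real" where "Ud x = (\<Sum>n. PD x (int n))"
definition Vd :: "real \<Rightarrow> real" where "Vd x = (\<Sum>n. PD x (- int n - 1))"

lemma Cs_split: "x > 0 \<Longrightarrow> Cs x = Uc x + Vc x"
  unfolding Cs_def Uc_def Vc_def using PC_summable(3) by (rule infsumI)
lemma Ds_split: "x > 0 \<Longrightarrow> Ds x = Ud x + Vd x"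
  unfolding Ds_def Ud_def Vd_def using PD_summable(3) by (rule infsumI)

definition msol :: "real \<Rightarrow> int \<Rightarrow> real" where
  "msol x k = (if 0 \<le> k then Vc x + (\<Sum>n<nat k. PC x (int n))
               else (\<Sum>n. PC x (- int (n + nat (-k)) - 1))) / Cs x"
definition nsol :: "real \<Rightarrow> int \<Rightarrow> real" where
  "nsol x k = x / Cs x * (if 0 \<le> k then (\<Sum>n. PD x (int (n + nat k)))
               else Ud x + (\<Sum>n<nat (-k). PD x (- int n - 1)))"
definition bsol :: "real \<Rightarrow> int \<Rightarrow> real" where
  "bsol x k = PC x k / Cs x / (2 * tt x k + 1)"
definition asol :: "real \<Rightarrow> int \<Rightarrow> real" where
  "asol x k = tt x k * bsol x k"

lemma msol_step: assumes x: "x > 0" shows "msol x (k+1) - msol x k = PC x k / Cs x"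
proof -
  have C: "Cs x > 0" by (rule Cs_pos[OF x])
  note sv = PC_summable(2)[OF x]
  consider "k \<ge> 0" | "k = -1" | "k \<le> -2" by linarith
  then show ?thesis
  proof cases
    case 1
    have "nat (k+1) = Suc (nat k)" using 1 by simp
    thus ?thesis unfolding msol_def using 1 C by (simp add: diff_divide_distrib[symmetric])
  next
    case 2
    have "(\<Sum>n. PC x (- int (Suc n) - 1)) = Vc x - PC x (-1)"
      unfolding Vc_def using suminf_split_head[OF sv] by simp
    thus ?thesis unfolding msol_def using 2 C by (simp add: diff_divide_distrib[symmetric] add.commute)
  next
    case 3
    define N where "N = nat (-k) - 1"
    have N: "nat (-k) = Suc N" "nat (-(k+1)) = N" "k = - int N - 1" using 3 N_def by auto
    have s: "summable (\<lambda>n. PC x (- int (n + N) - 1))" using sv summable_iff_shift[of "\<lambda>n. PC x (- int n - 1)" N] by simp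
    have "(\<Sum>n. PC x (- int (n + Suc N) - 1)) = (\<Sum>n. PC x (- int (n + N) - 1)) - PC x (- int N - 1)"
      using suminf_split_head[OF s] by simp
    moreover have "k + 1 < 0" using 3 by simp
    ultimately show ?thesis unfolding msol_def using 3 C N
      by (simp add: diff_divide_distrib[symmetric])
  qed
qed

lemma nsol_step: assumes x: "x > 0" shows "nsol x k - nsol x (k+1) = x / Cs x * PD x k"
proof -
  have C: "Cs x > 0" by (rule Cs_pos[OF x])
  note su = PD_summable(1)[OF x]
  consider "k \<ge> 0" | "k = -1" | "k \<le> -2" by linarith
  then show ?thesis
  proof cases
    case 1
    have s: "summable (\<lambda>n. PD x (int (n + nat k)))" using su summable_iff_shift[of "\<lambda>n. PD x (int n)" "nat k"] by simp
    define S where "S = (\<Sum>n. PD x (int (n + nat k)))"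
    define S' where "S' = (\<Sum>n. PD x (int (n + nat (k+1))))"
    have E: "S' = S - PD x k"
      unfolding S_def S'_def using suminf_split_head[OF s] 1 by (simp add: nat_add_distrib)
    have "nsol x k = x / Cs x * S" "nsol x (k+1) = x / Cs x * S'" unfolding nsol_def S_def S'_def using 1 by simp_all
    thus ?thesis using E by (simp add: algebra_simps)
  next
    case 2
    thus ?thesis unfolding nsol_def Ud_def using C by (simp add: algebra_simps)
  next
    case 3
    define N where "N = nat (-k) - 1"
    have N: "nat (-k) = Suc N" "nat (-(k+1)) = N" "k = - int N - 1" using 3 N_def by auto
    have "k + 1 < 0" using 3 by simp
    have S: "(\<Sum>n<nat (-k). PD x (- int n - 1)) = (\<Sum>n<N. PD x (- int n - 1)) + PD x k"
      unfolding N(1) using N(3) by simp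
    have "nsol x k = x / Cs x * (Ud x + ((\<Sum>n<N. PD x (- int n - 1)) + PD x k))"
      unfolding nsol_def S[symmetric] using 3 by simp
    moreover have "nsol x (k+1) = x / Cs x * (Ud x + (\<Sum>n<N. PD x (- int n - 1)))"
      unfolding nsol_def N(2)[symmetric] using \<open>k+1 < 0\<close> by simp
    ultimately show ?thesis by (simp add: algebra_simps)
  qed
qed

lemma msol_lims: assumes x: "x > 0"
  shows "(msol x \<longlongrightarrow> 1) at_top" "(msol x \<longlongrightarrow> 0) at_bot"
proof -
  have C: "Cs x > 0" by (rule Cs_pos[OF x])
  note su = PC_summable(1)[OF x] and sv = PC_summable(2)[OF x]
  have "(\<lambda>N. msol x (int N)) = (\<lambda>N. (Vc x + (\<Sum>n<N. PC x (int n))) / Cs x)"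
    unfolding msol_def by auto
  moreover have "(\<lambda>N. (Vc x + (\<Sum>n<N. PC x (int n))) / Cs x) \<longlonglongrightarrow> (Vc x + Uc x) / Cs x"
    unfolding Uc_def using C by (intro tendsto_intros summable_LIMSEQ su) auto
  moreover have "(Vc x + Uc x) / Cs x = 1"
  proof -
    have "Vc x + Uc x = Cs x" using Cs_split[OF x] by simp
    thus ?thesis using C by simp
  qed
  ultimately show "(msol x \<longlongrightarrow> 1) at_top" by (intro int_tendsto_top_seq) simp
  have e: "msol x (- int N) = (\<Sum>n. PC x (- int (n + N) - 1)) / Cs x" for N
    unfolding msol_def by (cases "N = 0") (auto simp: Vc_def)
  have "(\<lambda>N. (\<Sum>n. PC x (- int (n + N) - 1))) = (\<lambda>N. Vc x - (\<Sum>n<N. PC x (- int n - 1)))"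
    unfolding Vc_def using suminf_minus_initial_segment[OF sv] by (simp add: add.commute)
  moreover have "(\<lambda>N. Vc x - (\<Sum>n<N. PC x (- int n - 1))) \<longlonglongrightarrow> Vc x - Vc x"
    unfolding Vc_def by (intro tendsto_intros summable_LIMSEQ sv)
  ultimately have "(\<lambda>N. (\<Sum>n. PC x (- int (n + N) - 1)) / Cs x) \<longlonglongrightarrow> 0"
    by (metis (no_types) tendsto_divide_zero diff_self)
  thus "(msol x \<longlongrightarrow> 0) at_bot" unfolding e[symmetric] by (rule int_tendsto_bot_seq)
qed

lemma nsol_lims: assumes x: "x > 0"
  shows "(nsol x \<longlongrightarrow> 0) at_top" "(nsol x \<longlongrightarrow> x / Cs x * (Ud x + Vd x)) at_bot"
proof -
  note su = PD_summable(1)[OF x] and sv = PD_summable(2)[OF x]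
  have e: "nsol x (int N) = x / Cs x * (\<Sum>n. PD x (int (n + N)))" for N
    unfolding nsol_def by simp
  have "(\<lambda>N. (\<Sum>n. PD x (int (n + N)))) = (\<lambda>N. Ud x - (\<Sum>n<N. PD x (int n)))"
    unfolding Ud_def using suminf_minus_initial_segment[OF su] by (simp add: add.commute)
  moreover have "(\<lambda>N. Ud x - (\<Sum>n<N. PD x (int n))) \<longlonglongrightarrow> Ud x - Ud x"
    unfolding Ud_def by (intro tendsto_intros summable_LIMSEQ su)
  ultimately have "(\<lambda>N. x / Cs x * (\<Sum>n. PD x (int (n + N)))) \<longlonglongrightarrow> x / Cs x * 0"
    by (intro tendsto_intros) simp
  thus "(nsol x \<longlongrightarrow> 0) at_top" unfolding e[symmetric] by (intro int_tendsto_top_seq) simp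
  have e2: "nsol x (- int N) = x / Cs x * (Ud x + (\<Sum>n<N. PD x (- int n - 1)))" for N
    unfolding nsol_def by (cases "N = 0") (auto simp: Ud_def)
  have "(\<lambda>N. x / Cs x * (Ud x + (\<Sum>n<N. PD x (- int n - 1)))) \<longlonglongrightarrow> x / Cs x * (Ud x + Vd x)"
    unfolding Vd_def by (intro tendsto_intros summable_LIMSEQ sv)
  thus "(nsol x \<longlongrightarrow> x / Cs x * (Ud x + Vd x)) at_bot" unfolding e2[symmetric] by (rule int_tendsto_bot_seq)
qed

lemma g1: fixes t C Q uu :: real assumes "t > 0" "C > 0" "Q > 0" "uu > 0"
  shows "(t * (Q*(uu/t^2)/C/uu))^2 / (Q*(uu/t^2)/C/uu) = Q/C"
  using assms by (simp add: field_simps power2_eq_square)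
lemma g2: fixes t C XX P uu :: real assumes "C > 0" "uu > 0" "XX*uu = (t+2)*P"
  shows "XX/C = t*(P/C/uu) + 2*(P/C/uu)"
proof -
  have "XX = (t+2)*P/uu" using assms by (simp add: field_simps)
  thus ?thesis using assms by (simp add: field_simps)
qed
lemma g3: fixes t C x XX P uu vv :: real assumes "t > 0" "C > 0" "P > 0" "uu > 0" "vv > 0" "x*XX*uu = vv * P"
  shows "x/C*(XX/(t * vv)) = (P/C/uu)^2 / (t*(P/C/uu))"
proof -
  have "x*XX = vv * P/uu" using assms by (simp add: field_simps)
  hence "x/C*(XX/(t * vv)) = P/(C*t*uu)" using assms by (simp add: field_simps)
  also have "\<dots> = (P/C/uu)^2 / (t*(P/C/uu))" using assms by (simp add: field_simps power2_eq_square)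
  finally show ?thesis .
qed

lemma sol_facts: assumes x: "x > 0"
  shows "asol x k > 0" "bsol x k > 0"
    "msol x (k+1) - msol x k = 2 * asol x k + bsol x k"
    "msol x k - msol x (k-1) = (asol x k)^2 / bsol x k"
    "nsol x (k-1) - nsol x k = asol x k + 2 * bsol x k"
    "nsol x k - nsol x (k+1) = (bsol x k)^2 / asol x k"
proof -
  define t where "t = tt x k"
  define C where "C = Cs x"
  have t: "t > 0" unfolding t_def by (rule tt_facts(1)[OF x])
  have C: "C > 0" unfolding C_def by (rule Cs_pos[OF x])
  have P: "PC x k > 0" by (rule PC_pos[OF x])
  have b: "bsol x k = PC x k / C / (2*t+1)" unfolding bsol_def t_def C_def ..
  have a: "asol x k = t * (PC x k / C / (2*t+1))" unfolding asol_def b t_def ..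
  show bp: "bsol x k > 0" unfolding b using t C P by (simp add: add_pos_pos)
  show ap: "asol x k > 0" unfolding a using t C P by (simp add: add_pos_pos)
  have tC: "2*t+1 > 0" "C*(2*t+1) > 0" "C + C * (t * 2) > 0" using t C by (auto simp: add_pos_pos algebra_simps)
  show "msol x (k+1) - msol x k = 2 * asol x k + bsol x k"
  proof -
    have gen: "2 * (t * B) + B = (2*t+1) * B" for B :: real by (simp add: algebra_simps)
    have "2 * (t * (PC x k / C / (2*t+1))) + PC x k / C / (2*t+1) = (2*t+1) * (PC x k / C / (2*t+1))"
      by (rule gen)
    also have "\<dots> = PC x k / C" using tC by simp
    finally show ?thesis unfolding msol_step[OF x] a b C_def[symmetric] by simp
  qed
  have PCk: "PC x k = PC x (k-1) * ((2*t+1)/t^2)"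
    using PC_step[OF x, of "k-1"] tt_facts(3)[OF x, of k] t_def by simp
  have "msol x k - msol x (k-1) = PC x (k-1) / C" using msol_step[OF x, of "k-1"] C_def by simp
  also have "\<dots> = (t * (PC x k / C / (2*t+1)))^2 / (PC x k / C / (2*t+1))"
    unfolding PCk using g1[OF t C PC_pos[OF x] tC(1)] by simp
  finally show "msol x k - msol x (k-1) = (asol x k)^2 / bsol x k" unfolding a b .
  have R: "x * PD x (k-1) * (2 * t + 1) = (t + 2) * PC x k" using R_identity[OF x, of k] t_def by simp
  have "nsol x (k-1) - nsol x k = x / C * PD x (k-1)" using nsol_step[OF x, of "k-1"] C_def by simp
  also have "\<dots> = t*(PC x k/C/(2*t+1)) + 2*(PC x k/C/(2*t+1))"
    using g2[OF C tC(1), of "x * PD x (k-1)" t "PC x k"] R by simp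
  finally show "nsol x (k-1) - nsol x k = asol x k + 2 * bsol x k" unfolding a b by simp
  have PDk: "PD x k = PD x (k-1) / (t*(t+2))"
    using PD_step[OF x, of "k-1"] tt_facts(4)[OF x, of k] t_def by simp
  have "nsol x k - nsol x (k+1) = x / C * PD x k" using nsol_step[OF x, of k] C_def by simp
  also have "\<dots> = (PC x k / C / (2*t+1))^2 / (t * (PC x k / C / (2*t+1)))"
    unfolding PDk using g3[OF t C P tC(1), of "t+2" x "PD x (k-1)"] R t by simp
  finally show "nsol x k - nsol x (k+1) = (bsol x k)^2 / asol x k" unfolding a b .
qed

lemma exists_std: assumes x: "x > 0"
  shows "abmn_standard (asol x) (bsol x) (msol x) (nsol x)" "central_ratio (msol x) (nsol x) = x"
proof -
  note f = sol_facts[OF x]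
  have "abmn (asol x) (bsol x) (msol x) (nsol x)" unfolding abmn_def
  proof (intro allI conjI)
    fix i
    show "asol x i \<ge> 0" "bsol x i \<ge> 0" using f(1,2)[of i] by auto
    note cm = conv_m[OF f(1,2) f(3) f(4), of i] and cn = conv_n[OF f(1,2) f(5) f(6), of i]
    show "(asol x i + bsol x i) * (msol x i + asol x i) = asol x i * msol x (i + 1) + bsol x i * msol x (i - 1)"
      "(asol x i + bsol x i)^2 = bsol x i * (msol x (i + 1) - msol x (i - 1))"
      "(asol x i + bsol x i) * (nsol x i + bsol x i) = asol x i * nsol x (i + 1) + bsol x i * nsol x (i - 1)"
      "(asol x i + bsol x i)^2 = asol x i * (nsol x (i - 1) - nsol x (i + 1))"
      using cm cn by auto
  qed
  hence P: "abmn_positive (asol x) (bsol x) (msol x) (nsol x)" unfolding abmn_positive_def using f by auto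
  show "abmn_standard (asol x) (bsol x) (msol x) (nsol x)" unfolding abmn_standard_def has_limits_def
    using P msol_lims[OF x] nsol_lims[OF x] by blast
  have C: "Cs x > 0" by (rule Cs_pos[OF x])
  show "central_ratio (msol x) (nsol x) = x"
    unfolding central_ratio_def using nsol_step[OF x, of "-1"] msol_step[OF x, of "-1"] C by simp
qed


lemma std_sol_eq: assumes x: "x > 0"
  shows "standard_sol x = (asol x, bsol x, msol x, nsol x)"
proof -
  have "(THE p. case p of (a,b,m,n) \<Rightarrow> abmn_standard a b m n \<and> central_ratio m n = x) = (asol x, bsol x, msol x, nsol x)"
  proof (rule the_equality)
    show "case (asol x, bsol x, msol x, nsol x) of (a,b,m,n) \<Rightarrow> abmn_standard a b m n \<and> central_ratio m n = x"
      using exists_std[OF x] by simp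
  next
    fix p assume "case p of (a,b,m,n) \<Rightarrow> abmn_standard a b m n \<and> central_ratio m n = x"
    then obtain a b m n where p: "p = (a,b,m,n)" "abmn_standard a b m n" "central_ratio m n = x"
      by (cases p) auto
    thus "p = (asol x, bsol x, msol x, nsol x)" using std_unique[OF p(2) exists_std(1)[OF x]] exists_std(2)[OF x] by simp
  qed
  thus ?thesis unfolding standard_sol_def by simp
qed

lemma mina_map_Fm: assumes x: "x > 0" shows "mina_map x = Fm x"
proof -
  have S: "abmn_standard (asol x) (bsol x) (msol x) (nsol x)" by (rule exists_std(1)[OF x])
  hence P: "abmn_positive (asol x) (bsol x) (msol x) (nsol x)" "has_limits (msol x) (nsol x)"
    unfolding abmn_standard_def by auto
  have "mina_map x = mina_margin (msol x) (nsol x)" unfolding mina_map_def std_sol_eq[OF x] by simp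
  also have "\<dots> = Fm (central_ratio (msol x) (nsol x))" by (rule margin_formula(3)[OF P])
  also have "\<dots> = Fm x" using exists_std(2)[OF x] by simp
  finally show ?thesis .
qed

lemma Fm_pos: "x > 0 \<Longrightarrow> Fm x > 0"
  unfolding Fm_def using Cs_pos Ds_pos by simp

lemma filterlim_int_shift_top: "filterlim (\<lambda>i::int. i + c) at_top at_top"
  unfolding filterlim_at_top eventually_at_top_linorder
  by (intro allI, rule_tac x="Z - c" in exI) auto

lemma filterlim_int_shift_bot: "filterlim (\<lambda>i::int. i + c) at_bot at_bot"
  unfolding filterlim_at_bot eventually_at_bot_linorder
  by (intro allI, rule_tac x="Z - c" in exI) auto

lemma filterlim_int_neg_top: "filterlim (\<lambda>i::int. - i) at_bot at_top"
  unfolding filterlim_at_bot eventually_at_top_linorder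
  by (intro allI, rule_tac x="- Z" in exI) auto

lemma filterlim_int_neg_bot: "filterlim (\<lambda>i::int. - i) at_top at_bot"
  unfolding filterlim_at_top eventually_at_bot_linorder
  by (intro allI, rule_tac x="- Z" in exI) auto

lemma lim_eq: assumes "(f \<longlongrightarrow> L) at_top" shows "lim_top f = L"
  unfolding lim_top_def using assms by (rule tendsto_Lim[rotated]) simp
lemma lim_eq_bot: assumes "(f \<longlongrightarrow> L) at_bot" shows "lim_bot f = L"
  unfolding lim_bot_def using assms by (rule tendsto_Lim[rotated]) simp

lemma shift_sol: assumes P: "abmn_positive a b m n" and L: "has_limits m n"
  shows "abmn_positive (\<lambda>i. a (i+1)) (\<lambda>i. b (i+1)) (\<lambda>i. m (i+1)) (\<lambda>i. n (i+1))"
    "has_limits (\<lambda>i. m (i+1)) (\<lambda>i. n (i+1))"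
    "mina_margin (\<lambda>i. m (i+1)) (\<lambda>i. n (i+1)) = mina_margin m n"
    "central_ratio (\<lambda>i. m (i+1)) (\<lambda>i. n (i+1)) = sfun (central_ratio m n)"
proof -
  have A: "\<forall>i. a i \<ge> 0 \<and> b i \<ge> 0 \<and>
      (a i + b i) * (m i + a i) = a i * m (i+1) + b i * m (i-1) \<and>
      (a i + b i) * (n i + b i) = a i * n (i+1) + b i * n (i-1) \<and>
      (a i + b i)^2 = b i * (m (i+1) - m (i-1)) \<and>
      (a i + b i)^2 = a i * (n (i-1) - n (i+1))" and B: "\<forall>i. a i > 0 \<and> b i > 0"
    using P unfolding abmn_positive_def abmn_def by blast+
  show "abmn_positive (\<lambda>i. a (i+1)) (\<lambda>i. b (i+1)) (\<lambda>i. m (i+1)) (\<lambda>i. n (i+1))"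
    unfolding abmn_positive_def abmn_def
  proof (intro conjI allI)
    fix i :: int
    from A[rule_format, of "i+1"] show "a (i+1) \<ge> 0" "b (i+1) \<ge> 0"
      "(a (i+1) + b (i+1)) * (m (i+1) + a (i+1)) = a (i+1) * m (i+1+1) + b (i+1) * m (i-1+1)"
      "(a (i+1) + b (i+1)) * (n (i+1) + b (i+1)) = a (i+1) * n (i+1+1) + b (i+1) * n (i-1+1)"
      "(a (i+1) + b (i+1))^2 = b (i+1) * (m (i+1+1) - m (i-1+1))"
      "(a (i+1) + b (i+1))^2 = a (i+1) * (n (i-1+1) - n (i+1+1))" by auto
    from B show "a (i+1) > 0" "b (i+1) > 0" by auto
  qed
  obtain Lt Lb Nt Nb where lim: "(m \<longlongrightarrow> Lt) at_top" "(m \<longlongrightarrow> Lb) at_bot"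
    "(n \<longlongrightarrow> Nt) at_top" "(n \<longlongrightarrow> Nb) at_bot"
    using L unfolding has_limits_def by blast
  have lim2: "((\<lambda>i. m (i+1)) \<longlongrightarrow> Lt) at_top" "((\<lambda>i. m (i+1)) \<longlongrightarrow> Lb) at_bot"
    "((\<lambda>i. n (i+1)) \<longlongrightarrow> Nt) at_top" "((\<lambda>i. n (i+1)) \<longlongrightarrow> Nb) at_bot"
    using filterlim_compose[OF lim(1) filterlim_int_shift_top]
      filterlim_compose[OF lim(2) filterlim_int_shift_bot]
      filterlim_compose[OF lim(3) filterlim_int_shift_top]
      filterlim_compose[OF lim(4) filterlim_int_shift_bot] by auto
  show "has_limits (\<lambda>i. m (i+1)) (\<lambda>i. n (i+1))" unfolding has_limits_def using lim2 by blast
  show "mina_margin (\<lambda>i. m (i+1)) (\<lambda>i. n (i+1)) = mina_margin m n"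
    unfolding mina_margin_def using lim_eq lim_eq_bot lim lim2 by simp
  show "central_ratio (\<lambda>i. m (i+1)) (\<lambda>i. n (i+1)) = sfun (central_ratio m n)"
    unfolding central_ratio_cr[OF P] cr_step[OF P, of 0, simplified, symmetric]
    using cr_at_alt[OF P, of 1] unfolding central_ratio_def by simp
qed

lemma refl_sol: assumes P: "abmn_positive a b m n" and L: "has_limits m n"
  shows "abmn_positive (\<lambda>i. b (-i)) (\<lambda>i. a (-i)) (\<lambda>i. n (-i)) (\<lambda>i. m (-i))"
    "has_limits (\<lambda>i. n (-i)) (\<lambda>i. m (-i))"
    "mina_margin (\<lambda>i. n (-i)) (\<lambda>i. m (-i)) = 1 / mina_margin m n"
    "central_ratio (\<lambda>i. n (-i)) (\<lambda>i. m (-i)) = 1 / sfun (central_ratio m n)"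
proof -
  have A: "\<forall>i. a i \<ge> 0 \<and> b i \<ge> 0 \<and>
      (a i + b i) * (m i + a i) = a i * m (i+1) + b i * m (i-1) \<and>
      (a i + b i) * (n i + b i) = a i * n (i+1) + b i * n (i-1) \<and>
      (a i + b i)^2 = b i * (m (i+1) - m (i-1)) \<and>
      (a i + b i)^2 = a i * (n (i-1) - n (i+1))" and B: "\<forall>i. a i > 0 \<and> b i > 0"
    using P unfolding abmn_positive_def abmn_def by blast+
  show "abmn_positive (\<lambda>i. b (-i)) (\<lambda>i. a (-i)) (\<lambda>i. n (-i)) (\<lambda>i. m (-i))"
    unfolding abmn_positive_def abmn_def
  proof (intro conjI allI)
    fix i :: int
    have e: "- (i+1) = -i - 1" "- (i - 1) = -i + 1" by simp_all
    from A[rule_format, of "-i"] show "b (-i) \<ge> 0" "a (-i) \<ge> 0"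
      "(b (-i) + a (-i)) * (n (-i) + b (-i)) = b (-i) * n (-(i+1)) + a (-i) * n (-(i-1))"
      "(b (-i) + a (-i)) * (m (-i) + a (-i)) = b (-i) * m (-(i+1)) + a (-i) * m (-(i-1))"
      "(b (-i) + a (-i))^2 = a (-i) * (n (-(i+1)) - n (-(i-1)))"
      "(b (-i) + a (-i))^2 = b (-i) * (m (-(i-1)) - m (-(i+1)))" unfolding e by (auto simp: algebra_simps)
    from B show "b (-i) > 0" "a (-i) > 0" by auto
  qed
  obtain Lt Lb Nt Nb where lim: "(m \<longlongrightarrow> Lt) at_top" "(m \<longlongrightarrow> Lb) at_bot"
    "(n \<longlongrightarrow> Nt) at_top" "(n \<longlongrightarrow> Nb) at_bot"
    using L unfolding has_limits_def by blast
  have lim2: "((\<lambda>i. n (-i)) \<longlongrightarrow> Nb) at_top" "((\<lambda>i. n (-i)) \<longlongrightarrow> Nt) at_bot"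
    "((\<lambda>i. m (-i)) \<longlongrightarrow> Lb) at_top" "((\<lambda>i. m (-i)) \<longlongrightarrow> Lt) at_bot"
    using filterlim_compose[OF lim(4) filterlim_int_neg_top]
      filterlim_compose[OF lim(3) filterlim_int_neg_bot]
      filterlim_compose[OF lim(2) filterlim_int_neg_top]
      filterlim_compose[OF lim(1) filterlim_int_neg_bot] by auto
  show "has_limits (\<lambda>i. n (-i)) (\<lambda>i. m (-i))" unfolding has_limits_def using lim2 by blast
  show "mina_margin (\<lambda>i. n (-i)) (\<lambda>i. m (-i)) = 1 / mina_margin m n"
    unfolding mina_margin_def using lim_eq lim_eq_bot lim lim2 by simp
  have "central_ratio (\<lambda>i. n (-i)) (\<lambda>i. m (-i)) = 1 / cr_at a b 1"
    using cr_at_alt[OF P, of 1] unfolding central_ratio_def by simp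
  thus "central_ratio (\<lambda>i. n (-i)) (\<lambda>i. m (-i)) = 1 / sfun (central_ratio m n)"
    unfolding central_ratio_cr[OF P] using cr_step[OF P, of 0] by simp
qed

lemma std_pos: assumes x: "x > 0"
  shows "abmn_positive (asol x) (bsol x) (msol x) (nsol x)" "has_limits (msol x) (nsol x)"
    "mina_margin (msol x) (nsol x) = Fm x"
proof -
  show P: "abmn_positive (asol x) (bsol x) (msol x) (nsol x)" "has_limits (msol x) (nsol x)"
    using exists_std(1)[OF x] unfolding abmn_standard_def by auto
  show "mina_margin (msol x) (nsol x) = Fm x" using margin_formula(3)[OF P] exists_std(2)[OF x] by simp
qed

lemma Fm_shift: assumes x: "x > 0" shows "Fm (sfun x) = Fm x"
proof -
  note S = std_pos[OF x]
  note T = shift_sol[OF S(1,2)]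
  have "Fm (sfun x) = mina_margin (\<lambda>i. msol x (i+1)) (\<lambda>i. nsol x (i+1))"
    using margin_formula(3)[OF T(1,2)] T(4) exists_std(2)[OF x] by simp
  also have "\<dots> = Fm x" using T(3) S(3) by simp
  finally show ?thesis .
qed

lemma Fm_recip_s: assumes x: "x > 0" shows "Fm (1 / sfun x) = 1 / Fm x"
proof -
  note S = std_pos[OF x]
  note T = refl_sol[OF S(1,2)]
  have "Fm (1 / sfun x) = mina_margin (\<lambda>i. nsol x (-i)) (\<lambda>i. msol x (-i))"
    using margin_formula(3)[OF T(1,2)] T(4) exists_std(2)[OF x] by simp
  also have "\<dots> = 1 / Fm x" using T(3) S(3) by simp
  finally show ?thesis .
qed

lemma Fm_recip: assumes x: "x > 0" shows "Fm (1 / x) = 1 / Fm x"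
proof -
  define x' where "x' = sfun_inv x"
  have x': "x' > 0" "sfun x' = x" using sfun_inv_pos[OF x] sfun_sfun_inv[OF x] x'_def by auto
  have "Fm (1/x) = 1 / Fm x'" using Fm_recip_s[OF x'(1)] x'(2) by simp
  also have "Fm x' = Fm x" using Fm_shift[OF x'(1)] x'(2) by simp
  finally show ?thesis .
qed

lemma margins_set: "{mina_margin m n | a b m n. abmn_positive a b m n \<and> has_limits m n} = Fm ` {0<..}"
proof
  show "{mina_margin m n | a b m n. abmn_positive a b m n \<and> has_limits m n} \<subseteq> Fm ` {0<..}"
  proof
    fix z assume "z \<in> {mina_margin m n | a b m n. abmn_positive a b m n \<and> has_limits m n}"
    then obtain a b m n where P: "abmn_positive a b m n" "has_limits m n" "z = mina_margin m n" by blast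
    have "central_ratio m n > 0" using central_ratio_cr[OF P(1)] cr_at_pos[OF P(1)] by simp
    thus "z \<in> Fm ` {0<..}" using margin_formula(3)[OF P(1,2)] P(3) by auto
  qed
  show "Fm ` {0<..} \<subseteq> {mina_margin m n | a b m n. abmn_positive a b m n \<and> has_limits m n}"
  proof
    fix z assume "z \<in> Fm ` {0<..}"
    then obtain x where x: "x > 0" "z = Fm x" by auto
    show "z \<in> {mina_margin m n | a b m n. abmn_positive a b m n \<and> has_limits m n}"
      unfolding mem_Collect_eq
      apply (rule exI[of _ "asol x"], rule exI[of _ "bsol x"], rule exI[of _ "msol x"], rule exI[of _ "nsol x"])
      using std_pos[OF x(1)] x by auto
  qed
qed


lemma sfun_10: "sfun 10 = 1"
proof -
  have "omega 10 = 9" unfolding omega_def by simp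
  thus ?thesis unfolding sfun_def by simp
qed

lemma sfun_inv_1: "sfun_inv 1 = 10"
  using sfun_inv_sfun[of 10] sfun_10 by simp

lemma Fm_inv_shift: "x > 0 \<Longrightarrow> Fm (sfun_inv x) = Fm x"
  using Fm_shift[OF sfun_inv_pos[of x]] sfun_sfun_inv[of x] by simp

lemma Fm_funpow: "x > 0 \<Longrightarrow> Fm ((sfun ^^ n) x) = Fm x"
  by (induction n) (auto simp: Fm_shift funpow_sfun_pos)

lemma Fm_funpow_inv: "x > 0 \<Longrightarrow> Fm ((sfun_inv ^^ n) x) = Fm x"
  by (induction n) (auto simp: Fm_inv_shift funpow_sfun_inv_pos)

lemma orbit_rep: assumes x: "x > 0" shows "\<exists>y\<in>{1..10}. Fm y = Fm x"
proof (cases "x \<ge> 1")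
  case True
  obtain N where N: "x < 9^N" using real_arch_pow[of 9 x] by auto
  have bnd: "n \<le> N" if "(sfun ^^ n) x \<ge> 1" for n
  proof (rule ccontr)
    assume "\<not> n \<le> N"
    hence "(9::real)^N \<le> 9^n" by (intro power_increasing) auto
    moreover have "(sfun ^^ n) x \<le> x / 9^n" by (rule funpow_sfun_le[OF x])
    moreover have "x < 9^n" using N \<open>(9::real)^N \<le> 9^n\<close> by linarith
    hence "x / 9^n < 1" by simp
    ultimately have "(sfun ^^ n) x < 1" by linarith
    thus False using that by simp
  qed
  define n where "n = (GREATEST n. (sfun ^^ n) x \<ge> 1)"
  have n1: "(sfun ^^ n) x \<ge> 1" unfolding n_def
    by (rule GreatestI_nat[where k=0]) (use True bnd in auto)
  have n2: "\<not> (sfun ^^ Suc n) x \<ge> 1"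
  proof
    assume "(sfun ^^ Suc n) x \<ge> 1"
    hence "Suc n \<le> n" unfolding n_def by (rule Greatest_le_nat) (use bnd in auto)
    thus False by simp
  qed
  define y where "y = (sfun ^^ n) x"
  have "y \<le> 10"
  proof (rule ccontr)
    assume "\<not> y \<le> 10"
    hence "sfun 10 < sfun y" by (intro sfun_strict_mono) auto
    thus False using n2 sfun_10 y_def by simp
  qed
  thus ?thesis using n1 Fm_funpow[OF x, of n] y_def by auto
next
  case False
  obtain N where N: "1/x < 9^N" using real_arch_pow[of 9 "1/x"] by auto
  have ex: "(sfun_inv ^^ N) x \<ge> 1"
  proof -
    have "1 \<le> 9^N * x" using N x by (simp add: field_simps)
    also have "\<dots> \<le> (sfun_inv ^^ N) x" by (rule funpow_sfun_inv_ge[OF x])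
    finally show ?thesis .
  qed
  define n where "n = (LEAST n. (sfun_inv ^^ n) x \<ge> 1)"
  have n1: "(sfun_inv ^^ n) x \<ge> 1" unfolding n_def by (rule LeastI[of _ N]) (rule ex)
  have n0: "n \<noteq> 0"
  proof
    assume "n = 0" thus False using n1 False by simp
  qed
  then obtain k where k: "n = Suc k" by (cases n) auto
  have k1: "\<not> (sfun_inv ^^ k) x \<ge> 1"
  proof
    assume "(sfun_inv ^^ k) x \<ge> 1"
    hence "n \<le> k" unfolding n_def by (rule Least_le)
    thus False using k by simp
  qed
  define y where "y = (sfun_inv ^^ n) x"
  have "y < 10"
  proof -
    have "y = sfun_inv ((sfun_inv ^^ k) x)" unfolding y_def k by simp
    also have "\<dots> < sfun_inv 1" using k1 funpow_sfun_inv_pos[OF x, of k] by (intro sfun_inv_strict_mono) auto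
    finally show ?thesis using sfun_inv_1 by simp
  qed
  thus ?thesis using n1 Fm_funpow_inv[OF x, of n] y_def by auto
qed

lemma image_interval:
  assumes cont: "continuous_on {0<..} Fm"
  shows "\<exists>lam. 0 < lam \<and> Fm ` {0<..} = {lam .. 1/lam} \<and> (\<forall>x>0. lam \<le> Fm x)"
proof -
  define K where "K = {1..10::real}"
  have KS: "K \<subseteq> {0<..}" unfolding K_def by auto
  have cK: "continuous_on K Fm" using cont KS continuous_on_subset by blast
  have img: "Fm ` {0<..} = Fm ` K"
  proof
    show "Fm ` {0<..} \<subseteq> Fm ` K"
    proof
      fix z assume "z \<in> Fm ` {0<..}"
      then obtain x where x: "x > 0" "z = Fm x" by auto
      obtain y where "y \<in> K" "Fm y = Fm x" using orbit_rep[OF x(1)] unfolding K_def by blast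
      thus "z \<in> Fm ` K" using x by (metis image_eqI)
    qed
    show "Fm ` K \<subseteq> Fm ` {0<..}" using KS by auto
  qed
  obtain a where a: "a \<in> K" "\<forall>y\<in>K. Fm a \<le> Fm y"
    using continuous_attains_inf[OF _ _ cK] unfolding K_def by auto
  obtain b where b: "b \<in> K" "\<forall>y\<in>K. Fm y \<le> Fm b"
    using continuous_attains_sup[OF _ _ cK] unfolding K_def by auto
  have a0: "a > 0" "b > 0" using a b KS by auto
  have lo: "Fm a \<le> Fm x" if "x > 0" for x
    using a img that by (metis (no_types, lifting) greaterThan_iff image_iff rangeI)
  have hi: "Fm x \<le> Fm b" if xp: "x > 0" for x
  proof -
    obtain y where "y \<in> K" "Fm y = Fm x" using orbit_rep[OF xp] unfolding K_def by blast
    thus ?thesis using b by auto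
  qed
  have lo': "Fm a \<le> Fm x" if xp: "x > 0" for x
  proof -
    obtain y where "y \<in> K" "Fm y = Fm x" using orbit_rep[OF xp] unfolding K_def by blast
    thus ?thesis using a by auto
  qed
  have pa: "Fm a > 0" "Fm b > 0" using Fm_pos a0 by auto
  have "1 / Fm a \<le> Fm b" using hi[of "1/a"] Fm_recip[OF a0(1)] a0 by simp
  moreover have "Fm a \<le> 1 / Fm b" using lo'[of "1/b"] Fm_recip[OF a0(2)] a0 by simp
  hence "Fm b \<le> 1 / Fm a" using pa by (simp add: field_simps)
  ultimately have ab: "Fm b = 1 / Fm a" by simp
  have "Fm ` {0<..} = {Fm a .. Fm b}"
  proof
    show "Fm ` {0<..} \<subseteq> {Fm a..Fm b}" using lo' hi by auto
    show "{Fm a..Fm b} \<subseteq> Fm ` {0<..}"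
    proof
      fix z assume z: "z \<in> {Fm a..Fm b}"
      have "\<exists>x. min a b \<le> x \<and> x \<le> max a b \<and> Fm x = z"
      proof (cases "a \<le> b")
        case True
        have "continuous_on {a..b} Fm" using cK a b K_def by (auto intro: continuous_on_subset)
        thus ?thesis using IVT'[of Fm a z b] z True by auto
      next
        case False
        have "continuous_on {b..a} Fm" using cK a b K_def by (auto intro: continuous_on_subset)
        thus ?thesis using IVT2'[of Fm a z b] z False by auto
      qed
      then obtain x where "min a b \<le> x" "Fm x = z" by blast
      moreover have "min a b > 0" using a0 by simp
      ultimately show "z \<in> Fm ` {0<..}" by force
    qed
  qed
  thus ?thesis using ab pa lo' by auto
qed


lemma fr: fixes A B C D :: real assumes "B > 0" "D > 0" "A * D \<le> C * B" shows "A / B \<le> C / D"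
  using assms by (simp add: divide_simps)

lemma isCont_sfun: assumes y: "y > 0" shows "isCont sfun y"
proof -
  have "sqrt (8*y+1) \<ge> 0" using y by simp
  hence "4 * (sqrt (8*y+1) + 7) > 0" by (auto intro!: mult_pos_pos add_nonneg_pos)
  hence "4 * (sqrt (8*y+1) + 7) \<noteq> 0" by simp
  thus ?thesis unfolding sfun_def[abs_def] omega_def by (intro continuous_intros) auto
qed

lemma isCont_sfun_inv: "y > 0 \<Longrightarrow> isCont sfun_inv y"
proof -
  assume y: "y > 0"
  have "sfun (1/y) \<noteq> 0" using sfun_pos[of "1/y"] y by simp
  moreover have "isCont (\<lambda>z. sfun (1/z)) y"
    using y by (intro continuous_at_compose[OF _ isCont_sfun, unfolded o_def] continuous_intros) auto
  ultimately show ?thesis unfolding sfun_inv_def[abs_def] using y by (intro continuous_intros) auto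
qed

lemma isCont_funpow_sfun: "y > 0 \<Longrightarrow> isCont (sfun ^^ n) y"
proof (induction n)
  case (Suc n)
  have "(sfun ^^ Suc n) = sfun \<circ> (sfun ^^ n)" by simp
  thus ?case using continuous_at_compose[OF Suc(1)[OF Suc(2)] isCont_sfun[OF funpow_sfun_pos[OF Suc(2)]]] by (simp add: o_def)
qed simp

lemma isCont_funpow_sfun_inv: "y > 0 \<Longrightarrow> isCont (sfun_inv ^^ n) y"
proof (induction n)
  case (Suc n)
  have "(sfun_inv ^^ Suc n) = sfun_inv \<circ> (sfun_inv ^^ n)" by simp
  thus ?case using continuous_at_compose[OF Suc(1)[OF Suc(2)] isCont_sfun_inv[OF funpow_sfun_inv_pos[OF Suc(2)]]] by (simp add: o_def)
qed simp

lemma isCont_s_iter: "y > 0 \<Longrightarrow> isCont (s_iter i) y"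
proof -
  assume y: "y > 0"
  show ?thesis
  proof (cases "i \<ge> 0")
    case True
    hence "s_iter i = (sfun ^^ nat i)" unfolding s_iter_def[abs_def] by auto
    thus ?thesis using isCont_funpow_sfun[OF y] by simp
  next
    case False
    hence "s_iter i = (sfun_inv ^^ nat (-i))" unfolding s_iter_def[abs_def] by auto
    thus ?thesis using isCont_funpow_sfun_inv[OF y] by simp
  qed
qed

lemma isCont_cfun: "isCont cfun y"
  unfolding cfun_def[abs_def] omega_def by (intro continuous_intros) simp

lemma isCont_dfun: assumes y: "y > 0" shows "isCont dfun y"
proof -
  have "sqrt (8*y+1) \<ge> 0" using y by simp
  hence "8 * (sqrt (8*y+1) + 1) > 0" by (auto intro!: mult_pos_pos add_nonneg_pos)
  hence "8 * (sqrt (8*y+1) + 1) \<noteq> 0" by simp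
  thus ?thesis unfolding dfun_def[abs_def] omega_def by (intro continuous_intros) auto
qed

lemma isCont_PC: assumes y: "y > 0" shows "isCont (\<lambda>z. PC z k) y"
proof -
  have h: "isCont (c_iter i) y" for i
    unfolding c_iter_def using continuous_at_compose[OF isCont_s_iter[OF y] isCont_cfun, unfolded o_def]
    by (simp add: o_def)
  have nz: "c_iter i y - 1 \<noteq> 0" for i using cfun_gt1[OF s_iter_pos[OF y, of i]] unfolding c_iter_def by simp
  show ?thesis unfolding PC_def prodZ_def using h nz
    by (cases "0 \<le> k"; cases "k = -1") (auto intro!: continuous_intros)
qed

lemma isCont_PD: assumes y: "y > 0" shows "isCont (\<lambda>z. PD z k) y"
proof -
  have h: "isCont (d_iter i) y" for i
    unfolding d_iter_def using continuous_at_compose[OF isCont_s_iter[OF y] isCont_dfun[OF s_iter_pos[OF y]], unfolded o_def]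
    by (simp add: o_def)
  have nz: "d_iter i y - 1 \<noteq> 0" for i using dfun_gt1[OF s_iter_pos[OF y, of i]] unfolding d_iter_def by simp
  show ?thesis unfolding PD_def prodZ_def using h nz
    by (cases "0 \<le> k"; cases "k = -1") (auto intro!: continuous_intros)
qed

lemma cfun_mono: "0 < y \<Longrightarrow> y \<le> y' \<Longrightarrow> cfun y \<le> cfun y'"
proof -
  assume "0 < y" "y \<le> y'"
  hence "omega y \<le> omega y'" "omega y > 1" using omega_mono omega_gt1 by auto
  thus ?thesis unfolding cfun_def by (simp add: power_mono)
qed

lemma dfun_mono: "0 < y \<Longrightarrow> y \<le> y' \<Longrightarrow> dfun y \<le> dfun y'"
proof -
  assume "0 < y" "y \<le> y'"
  hence uv: "omega y \<le> omega y'" "omega y > 1" using omega_mono omega_gt1 by auto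
  define u where "u = omega y"
  define v where "v = omega y'"
  have uv': "1 < u" "u \<le> v" using uv u_def v_def by auto
  have "(v+3)^2*(u+1) - (u+3)^2*(v+1) = (v-u)*(u * v + u + v - 3)" by (simp add: algebra_simps power2_eq_square)
  moreover have "u * v \<ge> 1*1" using uv' by (intro mult_mono) auto
  hence "(v-u)*(u * v + u + v - 3) \<ge> 0" using uv' by (intro mult_nonneg_nonneg) auto
  ultimately have "(u+3)^2*(v+1) \<le> (v+3)^2*(u+1)" by linarith
  moreover have "(u+3)^2 * (8*(v+1)) = 8*((u+3)^2*(v+1))" by (rule mult.left_commute)
  moreover have "(v+3)^2 * (8*(u+1)) = 8*((v+3)^2*(u+1))" by (rule mult.left_commute)
  ultimately have "(u+3)^2 * (8*(v+1)) \<le> (v+3)^2 * (8*(u+1))" by linarith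
  moreover have "8*(u+1) > 0" "8*(v+1) > 0" using uv' by auto
  ultimately have "(u+3)^2/(8*(u+1)) \<le> (v+3)^2/(8*(v+1))" by (intro fr) auto
  thus ?thesis unfolding dfun_def u_def v_def .
qed

lemma s_iter_mono': "0 < y \<Longrightarrow> y \<le> y' \<Longrightarrow> s_iter i y \<le> s_iter i y'"
  by (rule s_iter_mono)

lemma PC_mono: assumes y: "0 < y" "y \<le> y'"
  shows "k \<ge> 0 \<Longrightarrow> PC y k \<le> PC y' k" "k < 0 \<Longrightarrow> PC y' k \<le> PC y k"
proof -
  have y': "y' > 0" using y by simp
  have h: "c_iter i y - 1 \<le> c_iter i y' - 1" for i
    unfolding c_iter_def using cfun_mono[OF s_iter_pos[OF y(1)] s_iter_mono[OF y]] by simp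
  have p: "c_iter i y - 1 > 0" "c_iter i y' - 1 > 0" for i
    unfolding c_iter_def using cfun_gt1[OF s_iter_pos[OF y(1)]] cfun_gt1[OF s_iter_pos[OF y']] by auto
  show "k \<ge> 0 \<Longrightarrow> PC y k \<le> PC y' k" unfolding PC_def prodZ_def
    using h p by (auto intro!: prod_mono simp: less_imp_le)
  show "k < 0 \<Longrightarrow> PC y' k \<le> PC y k" unfolding PC_def prodZ_def
    using h p by (auto intro!: prod_mono le_imp_inverse_le simp: less_imp_le)
qed

lemma PD_mono: assumes y: "0 < y" "y \<le> y'"
  shows "k \<ge> 0 \<Longrightarrow> PD y k \<le> PD y' k" "k < 0 \<Longrightarrow> PD y' k \<le> PD y k"
proof -
  have y': "y' > 0" using y by simp
  have h: "d_iter i y - 1 \<le> d_iter i y' - 1" for i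
    unfolding d_iter_def using dfun_mono[OF s_iter_pos[OF y(1)] s_iter_mono[OF y]] by simp
  have p: "d_iter i y - 1 > 0" "d_iter i y' - 1 > 0" for i
    unfolding d_iter_def using dfun_gt1[OF s_iter_pos[OF y(1)]] dfun_gt1[OF s_iter_pos[OF y']] by auto
  show "k \<ge> 0 \<Longrightarrow> PD y k \<le> PD y' k" unfolding PD_def prodZ_def
    using h p by (auto intro!: prod_mono simp: less_imp_le)
  show "k < 0 \<Longrightarrow> PD y' k \<le> PD y k" unfolding PD_def prodZ_def
    using h p by (auto intro!: prod_mono le_imp_inverse_le simp: less_imp_le)
qed

lemma infsum_cont_interval:
  fixes P :: "real \<Rightarrow> int \<Rightarrow> real"
  assumes pq: "0 < p" "p \<le> q"
    and pos: "\<And>y k. y > 0 \<Longrightarrow> P y k > 0"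
    and mono1: "\<And>y y' k. 0 < y \<Longrightarrow> y \<le> y' \<Longrightarrow> k \<ge> 0 \<Longrightarrow> P y k \<le> P y' k"
    and mono2: "\<And>y y' k. 0 < y \<Longrightarrow> y \<le> y' \<Longrightarrow> k < 0 \<Longrightarrow> P y' k \<le> P y k"
    and summ: "\<And>y. y > 0 \<Longrightarrow> P y summable_on UNIV"
    and cont: "\<And>y k. y > 0 \<Longrightarrow> isCont (\<lambda>z. P z k) y"
  shows "continuous_on {p..q} (\<lambda>y. \<Sum>\<^sub>\<infinity>k\<in>UNIV. P y k)"
proof -
  have bound: "norm (P y k) \<le> P p k + P q k" if "k \<in> UNIV" "y \<in> {p..q}" for k y
  proof -
    have y: "p \<le> y" "y \<le> q" "y > 0" using that pq by auto
    have "norm (P y k) = P y k" using pos[of y k] y by simp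
    also have "\<dots> \<le> P p k + P q k"
    proof (cases "k \<ge> 0")
      case True
      thus ?thesis using mono1[of y q k] y pos[of p k] pq by simp
    next
      case False
      thus ?thesis using mono2[of p y k] y pos[of q k] pq by simp
    qed
    finally show ?thesis .
  qed
  have Ms: "(\<lambda>k. P p k + P q k) summable_on UNIV"
    using summ[of p] summ[of q] pq by (intro summable_on_add) auto
  have ul: "uniform_limit {p..q} (\<lambda>X y. \<Sum>k\<in>X. P y k) (\<lambda>y. \<Sum>\<^sub>\<infinity>k\<in>UNIV. P y k) (finite_subsets_at_top UNIV)"
    by (rule Weierstrass_m_test_general[OF bound Ms])
  have "\<forall>\<^sub>F X in finite_subsets_at_top UNIV. continuous_on {p..q} (\<lambda>y. \<Sum>k\<in>X. P y k)"
    using pq by (intro always_eventually allI continuous_at_imp_continuous_on ballI continuous_sum cont) auto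
  thus ?thesis using uniform_limit_theorem[OF _ ul] by simp
qed

lemma cont_from_intervals:
  fixes f :: "real \<Rightarrow> real"
  assumes "\<And>p q. 0 < p \<Longrightarrow> p \<le> q \<Longrightarrow> continuous_on {p..q} f"
  shows "continuous_on {0<..} f"
proof (rule continuous_at_imp_continuous_on, rule ballI)
  fix x :: real assume "x \<in> {0<..}"
  hence x: "x > 0" by simp
  have "continuous_on {x/2..2*x} f" using assms x by simp
  moreover have "x \<in> interior {x/2..2*x}" using x by simp
  ultimately show "isCont f x" by (rule continuous_on_interior)
qed

lemma Cs_cont: "continuous_on {0<..} Cs"
  unfolding Cs_def[abs_def]
  by (rule cont_from_intervals, rule infsum_cont_interval)
     (auto intro: PC_pos PC_mono isCont_PC PC_summable(3) simp: summable_on_def)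

lemma Ds_cont: "continuous_on {0<..} Ds"
  unfolding Ds_def[abs_def]
  by (rule cont_from_intervals, rule infsum_cont_interval)
     (auto intro: PD_pos PD_mono isCont_PD PD_summable(3) simp: summable_on_def)

lemma Fm_cont: "continuous_on {0<..} Fm"
  unfolding Fm_def[abs_def] using Cs_cont Ds_cont Cs_pos
  by (intro continuous_intros) (auto simp: less_imp_neq[symmetric])


definition Ef :: "real \<Rightarrow> real" where "Ef w = (w+7)*(w-1)/16"
definition Hf :: "real \<Rightarrow> real" where "Hf w = (w-1)^2/(8*(w+1))"

lemma omega_lo: assumes "0 \<le> w" "w^2 \<le> 8*l+1" "l \<le> y" shows "w \<le> omega y"
proof -
  have "w^2 \<le> 8*y+1" using assms by linarith
  thus ?thesis unfolding omega_def by (rule real_le_rsqrt)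
qed

lemma omega_hi: assumes "0 \<le> w" "8*u+1 \<le> w^2" "y \<le> u" shows "omega y \<le> w"
proof -
  have "8*y+1 \<le> w^2" using assms by linarith
  hence "sqrt (8*y+1) \<le> sqrt (w^2)" by (rule real_sqrt_le_mono)
  thus ?thesis unfolding omega_def using assms(1) by simp
qed

lemma cfun_Ef: "cfun y - 1 = Ef (omega y)"
  unfolding cfun_def Ef_def by (simp add: field_simps power2_eq_square)

lemma dfun_Hf: "y > 0 \<Longrightarrow> dfun y - 1 = Hf (omega y)"
proof -
  assume "y > 0" hence "omega y > 1" by (rule omega_gt1)
  thus ?thesis unfolding dfun_def Hf_def by (simp add: field_simps power2_eq_square)
qed

lemma Ef_mono: "-3 \<le> u \<Longrightarrow> u \<le> v \<Longrightarrow> Ef u \<le> Ef v"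
proof -
  assume a: "-3 \<le> u" "u \<le> v"
  have "(v+7)*(v-1) - (u+7)*(u-1) = (v-u)*(u+v+6)" by (simp add: algebra_simps)
  moreover have "(v-u)*(u+v+6) \<ge> 0" using a by (intro mult_nonneg_nonneg) auto
  ultimately show ?thesis unfolding Ef_def by (simp add: divide_right_mono)
qed

lemma Hf_mono: "1 \<le> u \<Longrightarrow> u \<le> v \<Longrightarrow> Hf u \<le> Hf v"
proof -
  assume a: "1 \<le> u" "u \<le> v"
  have "(v-1)^2*(u+1) - (u-1)^2*(v+1) = (v-u)*(u * v + u + v - 3)" by (simp add: algebra_simps power2_eq_square)
  moreover have "u * v \<ge> 1*1" using a by (intro mult_mono) auto
  hence "(v-u)*(u * v + u + v - 3) \<ge> 0" using a by (intro mult_nonneg_nonneg) auto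
  ultimately have "(u-1)^2*(v+1) \<le> (v-1)^2*(u+1)" by linarith
  moreover have "(u-1)^2 * (8*(v+1)) = 8*((u-1)^2*(v+1))" by (rule mult.left_commute)
  moreover have "(v-1)^2 * (8*(u+1)) = 8*((v-1)^2*(u+1))" by (rule mult.left_commute)
  ultimately have "(u-1)^2 * (8*(v+1)) \<le> (v-1)^2 * (8*(u+1))" by linarith
  moreover have "8*(u+1) > 0" "8*(v+1) > 0" using a by auto
  ultimately show ?thesis unfolding Hf_def by (intro fr) auto
qed

lemma bnd_s: assumes "1 \<le> wl" "wl \<le> omega y" "omega y \<le> wu" shows "G wl \<le> sfun y" "sfun y \<le> G wu"
  using G_mono assms unfolding sfun_G by auto

lemma bnd_c: assumes "0 \<le> wl" "wl \<le> omega y" "omega y \<le> wu" shows "Ef wl \<le> cfun y - 1" "cfun y - 1 \<le> Ef wu"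
  using Ef_mono assms unfolding cfun_Ef by auto

lemma bnd_d: assumes "y > 0" "1 \<le> wl" "wl \<le> omega y" "omega y \<le> wu" shows "Hf wl \<le> dfun y - 1" "dfun y - 1 \<le> Hf wu"
  using Hf_mono assms unfolding dfun_Hf[OF assms(1)] by auto

lemma sinv_lo: assumes "0 < L" "0 < y" "sfun L \<le> y" shows "L \<le> sfun_inv y"
proof (rule ccontr)
  assume "\<not> ?thesis"
  hence "sfun (sfun_inv y) < sfun L" using sfun_strict_mono sfun_inv_pos assms by force
  thus False using sfun_sfun_inv assms by simp
qed

lemma sinv_hi: assumes "0 < U" "0 < y" "y \<le> sfun U" shows "sfun_inv y \<le> U"
proof (rule ccontr)
  assume "\<not> ?thesis"
  hence "sfun U < sfun (sfun_inv y)" using sfun_strict_mono assms by force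
  thus False using sfun_sfun_inv assms by simp
qed

lemma geo_tail: fixes f :: "nat \<Rightarrow> real"
  assumes nn: "\<And>n. f n \<ge> 0" and s: "summable f" and r: "0 \<le> r" "r < 1"
    and step: "\<And>n. f (Suc (n + N)) \<le> r * f (n + N)"
  shows "(\<Sum>n. f (n + N)) \<le> f N / (1 - r)"
proof -
  have b: "f (n + N) \<le> f N * r^n" for n
  proof (induction n)
    case (Suc n)
    have "f (Suc n + N) \<le> r * f (n + N)" using step[of n] by simp
    also have "\<dots> \<le> r * (f N * r^n)" using Suc r by (intro mult_left_mono) auto
    finally show ?case by (simp add: algebra_simps)
  qed simp
  have g: "summable (\<lambda>n. f N * r^n)" using r by (intro summable_mult summable_geometric) auto
  have "(\<Sum>n. f (n + N)) \<le> (\<Sum>n. f N * r^n)"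
    by (rule suminf_le[OF b summable_ignore_initial_segment[OF s] g])
  also have "\<dots> = f N * (1 / (1 - r))" using r by (simp add: suminf_mult suminf_geometric)
  finally show ?thesis by simp
qed

lemma sfun_lo_w: "1 \<le> w \<Longrightarrow> w \<le> omega y \<Longrightarrow> G w \<le> sfun y"
  unfolding sfun_G by (rule G_mono)
lemma sfun_hi_w: "0 < y \<Longrightarrow> omega y \<le> w \<Longrightarrow> sfun y \<le> G w"
  unfolding sfun_G using omega_gt1[of y] by (intro G_mono) auto
lemma c_lo_w: "0 \<le> w \<Longrightarrow> w \<le> omega y \<Longrightarrow> Ef w \<le> cfun y - 1"
  unfolding cfun_Ef by (rule Ef_mono) auto
lemma c_hi_w: "0 < y \<Longrightarrow> omega y \<le> w \<Longrightarrow> cfun y - 1 \<le> Ef w"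
  unfolding cfun_Ef using omega_gt1[of y] by (intro Ef_mono) auto
lemma d_lo_w: "0 < y \<Longrightarrow> 1 \<le> w \<Longrightarrow> w \<le> omega y \<Longrightarrow> Hf w \<le> dfun y - 1"
  using dfun_Hf[of y] Hf_mono[of w "omega y"] by simp
lemma d_hi_w: "0 < y \<Longrightarrow> omega y \<le> w \<Longrightarrow> dfun y - 1 \<le> Hf w"
  using dfun_Hf[of y] Hf_mono[of "omega y" w] omega_gt1[of y] by simp


abbreviation "X0 \<equiv> (5.3696125::real)"
lemma X0pos: "X0 > 0" by simp
lemma omega_X0: "omega X0 = 6.63"
  unfolding omega_def by (rule real_sqrt_unique) (simp_all add: power2_eq_square)
lemma W0: "6.63 \<le> omega (s_iter 0 X0)" "omega (s_iter 0 X0) \<le> 6.63" using omega_X0 by simp_all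
lemma Y0: "5.3696125 \<le> s_iter 0 X0" "s_iter 0 X0 \<le> 5.3696125" by simp_all
lemma Y1: "0.5813811445 \<le> s_iter 1 X0" "s_iter 1 X0 \<le> 0.5813811446"
proof -
  have e: "s_iter 1 X0 = sfun (s_iter 0 X0)" using s_iter_succ[OF X0pos, of 0] by simp
  have a: "G 6.63 \<le> sfun (s_iter 0 X0)" by (rule sfun_lo_w[OF _ W0(1)]) simp
  have b: "sfun (s_iter 0 X0) \<le> G 6.63" by (rule sfun_hi_w[OF s_iter_pos[OF X0pos] W0(2)])
  have c: "0.5813811445 \<le> G 6.63" "G 6.63 \<le> 0.5813811446" by (simp_all add: G_def power2_eq_square)
  show "0.5813811445 \<le> s_iter 1 X0" "s_iter 1 X0 \<le> 0.5813811446" using a b c e by linarith+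
qed
lemma W1: "2.377193546 \<le> omega (s_iter 1 X0)" "omega (s_iter 1 X0) \<le> 2.377193547"
  by (rule omega_lo[OF _ _ Y1(1)], simp, simp add: power2_eq_square) (rule omega_hi[OF _ _ Y1(2)], simp, simp add: power2_eq_square)
lemma Y2: "0.05056582371 \<le> s_iter 2 X0" "s_iter 2 X0 \<le> 0.05056582379"
proof -
  have e: "s_iter 2 X0 = sfun (s_iter 1 X0)" using s_iter_succ[OF X0pos, of 1] by simp
  have a: "G 2.377193546 \<le> sfun (s_iter 1 X0)" by (rule sfun_lo_w[OF _ W1(1)]) simp
  have b: "sfun (s_iter 1 X0) \<le> G 2.377193547" by (rule sfun_hi_w[OF s_iter_pos[OF X0pos] W1(2)])
  have c: "0.05056582371 \<le> G 2.377193546" "G 2.377193547 \<le> 0.05056582379" by (simp_all add: G_def power2_eq_square)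
  show "0.05056582371 \<le> s_iter 2 X0" "s_iter 2 X0 \<le> 0.05056582379" using a b c e by linarith+
qed
lemma W2: "1.185127246 \<le> omega (s_iter 2 X0)" "omega (s_iter 2 X0) \<le> 1.185127247"
  by (rule omega_lo[OF _ _ Y2(1)], simp, simp add: power2_eq_square) (rule omega_hi[OF _ _ Y2(2)], simp, simp add: power2_eq_square)
lemma Y3: "0.001046779609 \<le> s_iter 3 X0" "s_iter 3 X0 \<le> 0.001046779621"
proof -
  have e: "s_iter 3 X0 = sfun (s_iter 2 X0)" using s_iter_succ[OF X0pos, of 2] by simp
  have a: "G 1.185127246 \<le> sfun (s_iter 2 X0)" by (rule sfun_lo_w[OF _ W2(1)]) simp
  have b: "sfun (s_iter 2 X0) \<le> G 1.185127247" by (rule sfun_hi_w[OF s_iter_pos[OF X0pos] W2(2)])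
  have c: "0.001046779609 \<le> G 1.185127246" "G 1.185127247 \<le> 0.001046779621" by (simp_all add: G_def power2_eq_square)
  show "0.001046779609 \<le> s_iter 3 X0" "s_iter 3 X0 \<le> 0.001046779621" using a b c e by linarith+
qed
lemma W3: "1.004178388 \<le> omega (s_iter 3 X0)" "omega (s_iter 3 X0) \<le> 1.00417839"
  by (rule omega_lo[OF _ _ Y3(1)], simp, simp add: power2_eq_square) (rule omega_hi[OF _ _ Y3(2)], simp, simp add: power2_eq_square)
lemma Ym1_lo: "102.7284972 \<le> s_iter (-1) X0"
proof -
  have e: "s_iter (-1) X0 = sfun_inv (s_iter 0 X0)" using s_iter_pred[OF X0pos, of "0"] by simp
  have L: "(0::real) < 102.7284972" by simp
  have w: "omega 102.7284972 \<le> 28.68497826" by (rule omega_hi[OF _ _ order_refl]) (simp_all add: power2_eq_square)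
  have a: "sfun 102.7284972 \<le> G 28.68497826" by (rule sfun_hi_w[OF L w])
  have c: "G 28.68497826 \<le> 5.3696125" by (simp add: G_def power2_eq_square)
  have "sfun 102.7284972 \<le> s_iter 0 X0" using a c Y0(1) by linarith
  from sinv_lo[OF L s_iter_pos[OF X0pos] this] show ?thesis using e by simp
qed
lemma Wm1_lo: "28.68497825 \<le> omega (s_iter (-1) X0)"
  by (rule omega_lo[OF _ _ Ym1_lo]) (simp_all add: power2_eq_square)
lemma Ym1_hi: "s_iter (-1) X0 \<le> 102.7284973"
proof -
  have e: "s_iter (-1) X0 = sfun_inv (s_iter 0 X0)" using s_iter_pred[OF X0pos, of "0"] by simp
  have U: "(0::real) < 102.7284973" by simp
  have w: "28.68497827 \<le> omega 102.7284973" by (rule omega_lo[OF _ _ order_refl]) (simp_all add: power2_eq_square)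
  have a: "G 28.68497827 \<le> sfun 102.7284973" by (rule sfun_lo_w[OF _ w]) simp
  have c: "5.3696125 \<le> G 28.68497827" by (simp add: G_def power2_eq_square)
  have "s_iter 0 X0 \<le> sfun 102.7284973" using a c Y0(2) by linarith
  from sinv_hi[OF U s_iter_pos[OF X0pos] this] show ?thesis using e by simp
qed
lemma Wm1_hi: "omega (s_iter (-1) X0) \<le> 28.68497828"
  by (rule omega_hi[OF _ _ Ym1_hi]) (simp_all add: power2_eq_square)
lemma Ym2_lo: "22025.10437 \<le> s_iter (-2) X0"
proof -
  have e: "s_iter (-2) X0 = sfun_inv (s_iter (-1) X0)" using s_iter_pred[OF X0pos, of "(-1)"] by simp
  have L: "(0::real) < 22025.10437" by simp
  have w: "omega 22025.10437 \<le> 419.764023" by (rule omega_hi[OF _ _ order_refl]) (simp_all add: power2_eq_square)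
  have a: "sfun 22025.10437 \<le> G 419.764023" by (rule sfun_hi_w[OF L w])
  have c: "G 419.764023 \<le> 102.7284972" by (simp add: G_def power2_eq_square)
  have "sfun 22025.10437 \<le> s_iter (-1) X0" using a c Ym1_lo(1) by linarith
  from sinv_lo[OF L s_iter_pos[OF X0pos] this] show ?thesis using e by simp
qed
lemma Wm2_lo: "419.7640229 \<le> omega (s_iter (-2) X0)"
  by (rule omega_lo[OF _ _ Ym2_lo]) (simp_all add: power2_eq_square)
lemma Ym2_hi: "s_iter (-2) X0 \<le> 22025.10445"
proof -
  have e: "s_iter (-2) X0 = sfun_inv (s_iter (-1) X0)" using s_iter_pred[OF X0pos, of "(-1)"] by simp
  have U: "(0::real) < 22025.10445" by simp
  have w: "419.7640237 \<le> omega 22025.10445" by (rule omega_lo[OF _ _ order_refl]) (simp_all add: power2_eq_square)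
  have a: "G 419.7640237 \<le> sfun 22025.10445" by (rule sfun_lo_w[OF _ w]) simp
  have c: "102.7284973 \<le> G 419.7640237" by (simp add: G_def power2_eq_square)
  have "s_iter (-1) X0 \<le> sfun 22025.10445" using a c Ym1_hi by linarith
  from sinv_hi[OF U s_iter_pos[OF X0pos] this] show ?thesis using e by simp
qed
lemma Wm2_hi: "omega (s_iter (-2) X0) \<le> 419.7640238"
  by (rule omega_hi[OF _ _ Ym2_hi]) (simp_all add: power2_eq_square)
lemma Ym3_lo: "970408663.9 \<le> s_iter (-3) X0"
proof -
  have e: "s_iter (-3) X0 = sfun_inv (s_iter (-2) X0)" using s_iter_pred[OF X0pos, of "(-2)"] by simp
  have L: "(0::real) < 970408663.9" by simp
  have w: "omega 970408663.9 \<le> 88109.41671" by (rule omega_hi[OF _ _ order_refl]) (simp_all add: power2_eq_square)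
  have a: "sfun 970408663.9 \<le> G 88109.41671" by (rule sfun_hi_w[OF L w])
  have c: "G 88109.41671 \<le> 22025.10437" by (simp add: G_def power2_eq_square)
  have "sfun 970408663.9 \<le> s_iter (-2) X0" using a c Ym2_lo(1) by linarith
  from sinv_lo[OF L s_iter_pos[OF X0pos] this] show ?thesis using e by simp
qed
lemma Wm3_lo: "88109.4167 \<le> omega (s_iter (-3) X0)"
  by (rule omega_lo[OF _ _ Ym3_lo]) (simp_all add: power2_eq_square)
lemma Ym4_lo: "1883385958000000000 \<le> s_iter (-4) X0"
proof -
  have e: "s_iter (-4) X0 = sfun_inv (s_iter (-3) X0)" using s_iter_pred[OF X0pos, of "(-3)"] by simp
  have L: "(0::real) < 1883385958000000000" by simp
  have w: "omega 1883385958000000000 \<le> 3881634664" by (rule omega_hi[OF _ _ order_refl]) (simp_all add: power2_eq_square)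
  have a: "sfun 1883385958000000000 \<le> G 3881634664" by (rule sfun_hi_w[OF L w])
  have c: "G 3881634664 \<le> 970408663.9" by (simp add: G_def power2_eq_square)
  have "sfun 1883385958000000000 \<le> s_iter (-3) X0" using a c Ym3_lo(1) by linarith
  from sinv_lo[OF L s_iter_pos[OF X0pos] this] show ?thesis using e by simp
qed
lemma Wm4_lo: "3881634663 \<le> omega (s_iter (-4) X0)"
  by (rule omega_lo[OF _ _ Ym4_lo]) (simp_all add: power2_eq_square)


lemma E0_lo: "4.79605625 \<le> c_iter 0 X0 - 1"
proof -
  have "Ef 6.63 \<le> c_iter 0 X0 - 1" unfolding c_iter_def by (rule c_lo_w[OF _ W0(1)]) simp
  moreover have "4.79605625 \<le> Ef 6.63" by (simp add: Ef_def)
  ultimately show ?thesis by linarith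
qed
lemma F0_hi: "d_iter 0 X0 - 1 \<le> 0.519280799476"
proof -
  have "d_iter 0 X0 - 1 \<le> Hf 6.63" unfolding d_iter_def by (rule d_hi_w[OF s_iter_pos[OF X0pos] W0(2)])
  moreover have "Hf 6.63 \<le> 0.519280799476" by (simp add: Hf_def power2_eq_square)
  ultimately show ?thesis by linarith
qed
lemma E1_lo: "0.807138151946 \<le> c_iter 1 X0 - 1"
proof -
  have "Ef 2.377193546 \<le> c_iter 1 X0 - 1" unfolding c_iter_def by (rule c_lo_w[OF _ W1(1)]) simp
  moreover have "0.807138151946 \<le> Ef 2.377193546" by (simp add: Ef_def)
  ultimately show ?thesis by linarith
qed
lemma F1_hi: "d_iter 1 X0 - 1 \<le> 0.0702011166781"
proof -
  have "d_iter 1 X0 - 1 \<le> Hf 2.377193547" unfolding d_iter_def by (rule d_hi_w[OF s_iter_pos[OF X0pos] W1(2)])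
  moreover have "Hf 2.377193547 \<le> 0.0702011166781" by (simp add: Hf_def power2_eq_square)
  ultimately show ?thesis by linarith
qed
lemma E2_lo: "0.0947056290757 \<le> c_iter 2 X0 - 1"
proof -
  have "Ef 1.185127246 \<le> c_iter 2 X0 - 1" unfolding c_iter_def by (rule c_lo_w[OF _ W2(1)]) simp
  moreover have "0.0947056290757 \<le> Ef 1.185127246" by (simp add: Ef_def)
  ultimately show ?thesis by linarith
qed
lemma F2_hi: "d_iter 2 X0 - 1 \<le> 0.00196053214"
proof -
  have "d_iter 2 X0 - 1 \<le> Hf 1.185127247" unfolding d_iter_def by (rule d_hi_w[OF s_iter_pos[OF X0pos] W2(2)])
  moreover have "Hf 1.185127247 \<le> 0.00196053214" by (simp add: Hf_def power2_eq_square)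
  ultimately show ?thesis by linarith
qed
lemma E3_lo: "0.00209028518289 \<le> c_iter 3 X0 - 1"
proof -
  have "Ef 1.004178388 \<le> c_iter 3 X0 - 1" unfolding c_iter_def by (rule c_lo_w[OF _ W3(1)]) simp
  moreover have "0.00209028518289 \<le> Ef 1.004178388" by (simp add: Ef_def)
  ultimately show ?thesis by linarith
qed
lemma F3_hi: "d_iter 3 X0 - 1 \<le> 0.00000108890899379"
proof -
  have "d_iter 3 X0 - 1 \<le> Hf 1.00417839" unfolding d_iter_def by (rule d_hi_w[OF s_iter_pos[OF X0pos] W3(2)])
  moreover have "Hf 1.00417839 \<le> 0.00000108890899379" by (simp add: Hf_def power2_eq_square)
  ultimately show ?thesis by linarith
qed
lemma Em1_hi: "c_iter (-1) X0 - 1 \<le> 61.7461155378"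
proof -
  have "c_iter (-1) X0 - 1 \<le> Ef 28.68497828" unfolding c_iter_def by (rule c_hi_w[OF s_iter_pos[OF X0pos] Wm1_hi])
  moreover have "Ef 28.68497828 \<le> 61.7461155378" by (simp add: Ef_def)
  ultimately show ?thesis by linarith
qed
lemma Em2_hi: "c_iter (-2) X0 - 1 \<le> 11169.5887388"
proof -
  have "c_iter (-2) X0 - 1 \<le> Ef 419.7640238" unfolding c_iter_def by (rule c_hi_w[OF s_iter_pos[OF X0pos] Wm2_hi])
  moreover have "Ef 419.7640238 \<le> 11169.5887388" by (simp add: Ef_def)
  ultimately show ?thesis by linarith
qed
lemma Fm1_lo: "3.22746581725 \<le> d_iter (-1) X0 - 1"
proof -
  have "Hf 28.68497825 \<le> d_iter (-1) X0 - 1" unfolding d_iter_def by (rule d_lo_w[OF s_iter_pos[OF X0pos] _ Wm1_lo]) simp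
  moreover have "3.22746581725 \<le> Hf 28.68497825" by (simp add: Hf_def power2_eq_square)
  ultimately show ?thesis by linarith
qed
lemma Fm2_lo: "52.096691177 \<le> d_iter (-2) X0 - 1"
proof -
  have "Hf 419.7640229 \<le> d_iter (-2) X0 - 1" unfolding d_iter_def by (rule d_lo_w[OF s_iter_pos[OF X0pos] _ Wm2_lo]) simp
  moreover have "52.096691177 \<le> Hf 419.7640229" by (simp add: Hf_def power2_eq_square)
  ultimately show ?thesis by linarith
qed
lemma Fm3_lo: "11013.3020931 \<le> d_iter (-3) X0 - 1"
proof -
  have "Hf 88109.4167 \<le> d_iter (-3) X0 - 1" unfolding d_iter_def by (rule d_lo_w[OF s_iter_pos[OF X0pos] _ Wm3_lo]) simp
  moreover have "11013.3020931 \<le> Hf 88109.4167" by (simp add: Hf_def power2_eq_square)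
  ultimately show ?thesis by linarith
qed
lemma Fm4_lo: "485204332.5 \<le> d_iter (-4) X0 - 1"
proof -
  have "Hf 3881634663 \<le> d_iter (-4) X0 - 1" unfolding d_iter_def by (rule d_lo_w[OF s_iter_pos[OF X0pos] _ Wm4_lo]) simp
  moreover have "485204332.5 \<le> Hf 3881634663" by (simp add: Hf_def power2_eq_square)
  ultimately show ?thesis by linarith
qed

lemma cpos: "c_iter i X0 - 1 > 0" unfolding c_iter_def using cfun_gt1[OF s_iter_pos[OF X0pos]] by simp
lemma dpos: "d_iter i X0 - 1 > 0" unfolding d_iter_def using dfun_gt1[OF s_iter_pos[OF X0pos]] by simp

lemma PC_vals: "PC X0 0 = c_iter 0 X0 - 1" "PC X0 1 = PC X0 0 * (c_iter 1 X0 - 1)"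
  "PC X0 2 = PC X0 1 * (c_iter 2 X0 - 1)" "PC X0 3 = PC X0 2 * (c_iter 3 X0 - 1)"
  "PC X0 (-2) = 1 / (c_iter (-1) X0 - 1)" "PC X0 (-3) = PC X0 (-2) / (c_iter (-2) X0 - 1)"
  using PC_step[OF X0pos, of "-1"] PC_step[OF X0pos, of 0] PC_step[OF X0pos, of 1] PC_step[OF X0pos, of 2]
    PC_step[OF X0pos, of "-2"] PC_step[OF X0pos, of "-3"] cpos[of "-1"] cpos[of "-2"]
  by (simp_all add: field_simps)

lemma PD_vals: "PD X0 0 = d_iter 0 X0 - 1" "PD X0 1 = PD X0 0 * (d_iter 1 X0 - 1)"
  "PD X0 2 = PD X0 1 * (d_iter 2 X0 - 1)" "PD X0 3 = PD X0 2 * (d_iter 3 X0 - 1)"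
  "PD X0 (-2) = 1 / (d_iter (-1) X0 - 1)" "PD X0 (-3) = PD X0 (-2) / (d_iter (-2) X0 - 1)"
  "PD X0 (-4) = PD X0 (-3) / (d_iter (-3) X0 - 1)"
  using PD_step[OF X0pos, of "-1"] PD_step[OF X0pos, of 0] PD_step[OF X0pos, of 1] PD_step[OF X0pos, of 2]
    PD_step[OF X0pos, of "-2"] PD_step[OF X0pos, of "-3"] PD_step[OF X0pos, of "-4"]
    dpos[of "-1"] dpos[of "-2"] dpos[of "-3"]
  by (simp_all add: field_simps)

lemma PC_lo: "4.79605625 \<le> PC X0 0" "4.79605625 * 0.807138151946 \<le> PC X0 1" "4.79605625 * 0.807138151946 * 0.0947056290757 \<le> PC X0 2"
   "4.79605625 * 0.807138151946 * 0.0947056290757 * 0.00209028518289 \<le> PC X0 3"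
   "1 / 61.7461155378 \<le> PC X0 (-2)" "1 / 61.7461155378 / 11169.5887388 \<le> PC X0 (-3)"
proof -
  note v = PC_vals
  show a0: "4.79605625 \<le> PC X0 0" using E0_lo v(1) by simp
  show a1: "4.79605625 * 0.807138151946 \<le> PC X0 1" unfolding v(2) by (rule mult_mono[OF a0 E1_lo]) (use cpos PC_pos[OF X0pos] in \<open>auto simp: less_imp_le\<close>)
  show a2: "4.79605625 * 0.807138151946 * 0.0947056290757 \<le> PC X0 2" unfolding v(3) by (rule mult_mono[OF a1 E2_lo]) (use cpos PC_pos[OF X0pos] in \<open>auto simp: less_imp_le\<close>)
  show a3: "4.79605625 * 0.807138151946 * 0.0947056290757 * 0.00209028518289 \<le> PC X0 3" unfolding v(4) by (rule mult_mono[OF a2 E3_lo]) (use cpos PC_pos[OF X0pos] in \<open>auto simp: less_imp_le\<close>)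
  show b1: "1 / 61.7461155378 \<le> PC X0 (-2)" unfolding v(5) using Em1_hi cpos[of "-1"] by (intro divide_left_mono) auto
  show "1 / 61.7461155378 / 11169.5887388 \<le> PC X0 (-3)" unfolding v(6) using Em2_hi cpos[of "-2"] b1
    by (intro frac_le) auto
qed

lemma PD_hi: "PD X0 0 \<le> 0.519280799476" "PD X0 1 \<le> 0.519280799476 * 0.0702011166781" "PD X0 2 \<le> 0.519280799476 * 0.0702011166781 * 0.00196053214"
   "PD X0 3 \<le> 0.519280799476 * 0.0702011166781 * 0.00196053214 * 0.00000108890899379"
   "PD X0 (-2) \<le> 1 / 3.22746581725" "PD X0 (-3) \<le> 1 / 3.22746581725 / 52.096691177" "PD X0 (-4) \<le> 1 / 3.22746581725 / 52.096691177 / 11013.3020931"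
proof -
  note v = PD_vals
  have p: "\<And>k. PD X0 k \<ge> 0" using PD_pos[OF X0pos] less_imp_le by blast
  show a0: "PD X0 0 \<le> 0.519280799476" using F0_hi v(1) by simp
  show a1: "PD X0 1 \<le> 0.519280799476 * 0.0702011166781" unfolding v(2) by (rule mult_mono[OF a0 F1_hi]) (use dpos p in \<open>auto simp: less_imp_le\<close>)
  show a2: "PD X0 2 \<le> 0.519280799476 * 0.0702011166781 * 0.00196053214" unfolding v(3) by (rule mult_mono[OF a1 F2_hi]) (use dpos p in \<open>auto simp: less_imp_le\<close>)
  show a3: "PD X0 3 \<le> 0.519280799476 * 0.0702011166781 * 0.00196053214 * 0.00000108890899379" unfolding v(4) by (rule mult_mono[OF a2 F3_hi]) (use dpos p in \<open>auto simp: less_imp_le\<close>)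
  show b1: "PD X0 (-2) \<le> 1 / 3.22746581725" unfolding v(5) using Fm1_lo by (intro divide_left_mono) auto
  show b2: "PD X0 (-3) \<le> 1 / 3.22746581725 / 52.096691177" unfolding v(6) using Fm2_lo b1 p
    by (intro frac_le) auto
  show "PD X0 (-4) \<le> 1 / 3.22746581725 / 52.096691177 / 11013.3020931" unfolding v(7) using Fm3_lo b2 p
    by (intro frac_le) auto
qed


lemma sum7_le: fixes a b c d e f p0 p1 p2 p3 q1 q2 q3 :: real
  assumes "a \<le> p0" "b \<le> p1" "c \<le> p2" "d \<le> p3" "q1 = 1" "e \<le> q2" "f \<le> q3"
  shows "a + b + c + d + 1 + e + f \<le> (p0 + p1 + p2 + p3) + (q1 + q2 + q3)"
  using assms by linarith

lemma sum8_le: fixes a b c d e f g p0 p1 p2 p3 q1 q2 q3 q4 :: real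
  assumes "p0 \<le> a" "p1 \<le> b" "p2 \<le> c" "p3 \<le> d" "q1 = 1" "q2 \<le> e" "q3 \<le> f" "q4 \<le> g"
  shows "p0 + p1 + p2 + p3 + (q1 + q2 + q3 + q4) \<le> a + b + c + d + (1 + e + f + g)"
  using assms by linarith

lemma Cs_X0_lo: "10.050712419377 \<le> Cs X0"
proof -
  have P: "\<And>k. PC X0 k \<ge> 0" using PC_pos[OF X0pos] less_imp_le by blast
  have U: "(\<Sum>n<4. PC X0 (int n)) \<le> Uc X0" unfolding Uc_def
    by (rule sum_le_suminf[OF PC_summable(1)[OF X0pos]]) (use P in auto)
  have U': "(\<Sum>n<4. PC X0 (int n)) = PC X0 0 + PC X0 1 + PC X0 2 + PC X0 3" by (simp add: eval_nat_numeral)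
  have V: "(\<Sum>n<3. PC X0 (- int n - 1)) \<le> Vc X0" unfolding Vc_def
    by (rule sum_le_suminf[OF PC_summable(2)[OF X0pos]]) (use P in auto)
  have V': "(\<Sum>n<3. PC X0 (- int n - 1)) = PC X0 (-1) + PC X0 (-2) + PC X0 (-3)" by (simp add: eval_nat_numeral)
  have "(10.050712419377::real) \<le> 4.79605625 + 4.79605625 * 0.807138151946 + 4.79605625 * 0.807138151946 * 0.0947056290757 + 4.79605625 * 0.807138151946 * 0.0947056290757 * 0.00209028518289
      + 1 + 1 / 61.7461155378 + 1 / 61.7461155378 / 11169.5887388" by simp
  also have "\<dots> \<le> (PC X0 0 + PC X0 1 + PC X0 2 + PC X0 3) + (PC X0 (-1) + PC X0 (-2) + PC X0 (-3))"
    using PC_lo PC_m1[of X0] by (intro sum7_le) auto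
  also have "\<dots> \<le> Uc X0 + Vc X0" using U U' V V' by linarith
  also have "\<dots> = Cs X0" using Cs_split[OF X0pos] by simp
  finally show ?thesis .
qed

lemma Ds_X0_hi: "Ds X0 \<le> 1.8715949324445"
proof -
  have P: "\<And>k. PD X0 k \<ge> 0" using PD_pos[OF X0pos] less_imp_le by blast
  note su = PD_summable(1)[OF X0pos] and sv = PD_summable(2)[OF X0pos]
  have U: "Ud X0 = (\<Sum>n. PD X0 (int (n + 3))) + (\<Sum>i<3. PD X0 (int i))"
    unfolding Ud_def using suminf_split_initial_segment[OF su, of 3] by simp
  have U': "(\<Sum>i<3. PD X0 (int i)) = PD X0 0 + PD X0 1 + PD X0 2" by (simp add: eval_nat_numeral)
  have tailU: "(\<Sum>n. PD X0 (int (n + 3))) \<le> PD X0 3 / (1 - 0.00000109574757495)"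
  proof -
    have "(\<Sum>n. PD X0 (int (n + 3))) \<le> PD X0 (int 3) / (1 - 0.00000109574757495)"
    proof (rule geo_tail[where f="\<lambda>n. PD X0 (int n)"])
      fix n
      define k where "k = int (n + 3)"
      have k3: "3 \<le> k + 1" unfolding k_def by simp
      have st: "PD X0 (k+1) = PD X0 k * (d_iter (k+1) X0 - 1)" by (rule PD_step[OF X0pos])
      have "d_iter (k+1) X0 - 1 \<le> (s_iter (k+1) X0)^2" unfolding d_iter_def by (rule d_small[OF s_iter_pos[OF X0pos]])
      also have "\<dots> \<le> (s_iter 3 X0)^2" using s_iter_antimono[OF X0pos k3] less_imp_le[OF s_iter_pos[OF X0pos]] by (intro power_mono) auto
      also have "\<dots> \<le> 0.001046779621^2" using Y3(2) less_imp_le[OF s_iter_pos[OF X0pos]] by (intro power_mono) auto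
      also have "\<dots> \<le> 0.00000109574757495" by (simp add: power2_eq_square)
      finally have "d_iter (k+1) X0 - 1 \<le> 0.00000109574757495" .
      from mult_left_mono[OF this P[of k]]
      have "PD X0 (k+1) \<le> PD X0 k * 0.00000109574757495" unfolding st .
      hence "PD X0 (k+1) \<le> 0.00000109574757495 * PD X0 k" by (metis mult.commute)
      thus "PD X0 (int (Suc (n + 3))) \<le> 0.00000109574757495 * PD X0 (int (n + 3))" unfolding k_def by (simp add: add.commute)
    qed (use P su in auto)
    thus ?thesis by simp
  qed
  have V: "Vd X0 = (\<Sum>n. PD X0 (- int (n + 3) - 1)) + (\<Sum>i<3. PD X0 (- int i - 1))"
    unfolding Vd_def using suminf_split_initial_segment[OF sv, of 3] by simp
  have V': "(\<Sum>i<3. PD X0 (- int i - 1)) = PD X0 (-1) + PD X0 (-2) + PD X0 (-3)" by (simp add: eval_nat_numeral)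
  have tailV: "(\<Sum>n. PD X0 (- int (n + 3) - 1)) \<le> PD X0 (-4) / (1 - 1 / 485204332.5)"
  proof -
    have "(\<Sum>n. PD X0 (- int (n + 3) - 1)) \<le> PD X0 (- int 3 - 1) / (1 - 1 / 485204332.5)"
    proof (rule geo_tail[where f="\<lambda>n. PD X0 (- int n - 1)"])
      fix n
      define k where "k = - int (n + 3) - 1"
      have k4: "k \<le> -4" unfolding k_def by simp
      have st: "PD X0 k = PD X0 (k - 1) * (d_iter k X0 - 1)" using PD_step[OF X0pos, of "k-1"] by simp
      have "485204332.5 \<le> d_iter (-4) X0 - 1" by (rule Fm4_lo)
      also have "\<dots> \<le> d_iter k X0 - 1" unfolding d_iter_def
        using dfun_mono[OF s_iter_pos[OF X0pos] s_iter_antimono[OF X0pos k4]] by simp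
      finally have dk: "485204332.5 \<le> d_iter k X0 - 1" .
      have "PD X0 (k - 1) = PD X0 k / (d_iter k X0 - 1)" using st dpos[of k] by simp
      also have "\<dots> \<le> PD X0 k / 485204332.5" using dk P[of k] by (intro divide_left_mono) auto
      finally have "PD X0 (k - 1) \<le> 1 / 485204332.5 * PD X0 k" by simp
      thus "PD X0 (- int (Suc (n + 3)) - 1) \<le> 1 / 485204332.5 * PD X0 (- int (n + 3) - 1)"
        unfolding k_def by (simp add: algebra_simps)
    qed (use P sv in auto)
    thus ?thesis by simp
  qed
  have "Ds X0 = Ud X0 + Vd X0" by (rule Ds_split[OF X0pos])
  also have "\<dots> \<le> 0.519280799476 + 0.519280799476 * 0.0702011166781 + 0.519280799476 * 0.0702011166781 * 0.00196053214 + 0.519280799476 * 0.0702011166781 * 0.00196053214 * 0.00000108890899379 / (1 - 0.00000109574757495)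
      + (1 + 1 / 3.22746581725 + 1 / 3.22746581725 / 52.096691177 + 1 / 3.22746581725 / 52.096691177 / 11013.3020931 / (1 - 1 / 485204332.5))"
  proof -
    have t1: "PD X0 3 / (1 - 0.00000109574757495) \<le> 0.519280799476 * 0.0702011166781 * 0.00196053214 * 0.00000108890899379 / (1 - 0.00000109574757495)"
      using PD_hi(4) by (intro divide_right_mono) auto
    have t2: "PD X0 (-4) / (1 - 1 / 485204332.5) \<le> 1 / 3.22746581725 / 52.096691177 / 11013.3020931 / (1 - 1 / 485204332.5)"
      using PD_hi(7) by (intro divide_right_mono) auto
    have "PD X0 0 + PD X0 1 + PD X0 2 + PD X0 3 / (1 - 0.00000109574757495) + (PD X0 (-1) + PD X0 (-2) + PD X0 (-3) + PD X0 (-4) / (1 - 1 / 485204332.5))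
       \<le> 0.519280799476 + 0.519280799476 * 0.0702011166781 + 0.519280799476 * 0.0702011166781 * 0.00196053214 + 0.519280799476 * 0.0702011166781 * 0.00196053214 * 0.00000108890899379 / (1 - 0.00000109574757495)
      + (1 + 1 / 3.22746581725 + 1 / 3.22746581725 / 52.096691177 + 1 / 3.22746581725 / 52.096691177 / 11013.3020931 / (1 - 1 / 485204332.5))"
      using PD_hi PD_m1[of X0] t1 t2 by (intro sum8_le) auto
    moreover have "Ud X0 + Vd X0 \<le> PD X0 0 + PD X0 1 + PD X0 2 + PD X0 3 / (1 - 0.00000109574757495) + (PD X0 (-1) + PD X0 (-2) + PD X0 (-3) + PD X0 (-4) / (1 - 1 / 485204332.5))"
      unfolding U V using U' V' tailU tailV by linarith
    ultimately show ?thesis by linarith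
  qed
  also have "\<dots> \<le> 1.8715949324445" by simp
  finally show ?thesis .
qed

lemma Fm_X0: "Fm X0 \<le> 0.999904"
proof -
  have C: "10.050712419377 \<le> Cs X0" by (rule Cs_X0_lo)
  have Dd: "Ds X0 \<le> 1.8715949324445" by (rule Ds_X0_hi)
  have Dp: "Ds X0 > 0" by (rule Ds_pos[OF X0pos])
  have "Fm X0 = X0 * Ds X0 / Cs X0" unfolding Fm_def by (simp add: field_simps)
  also have "\<dots> \<le> X0 * 1.8715949324445 / 10.050712419377" using C Dd Dp by (intro frac_le) auto
  also have "\<dots> \<le> 0.999904" by simp
  finally show ?thesis .
qed


theorem mainTheorem14:
  shows "(\<forall>x>0. mina_map (sfun x) = mina_map x)
    \<and> continuous_on {0<..} mina_map
    \<and> (\<forall>x>0. (\<lambda>k. prodZ (\<lambda>i. c_iter i x - 1) k) summable_on (UNIV::int set)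
            \<and> (\<lambda>k. prodZ (\<lambda>i. d_iter i x - 1) k) summable_on (UNIV::int set)
            \<and> mina_map x = inverse (\<Sum>\<^sub>\<infinity>k\<in>(UNIV::int set). prodZ (\<lambda>i. c_iter i x - 1) k)
                 * x * (\<Sum>\<^sub>\<infinity>k\<in>(UNIV::int set). prodZ (\<lambda>i. d_iter i x - 1) k))
    \<and> (\<exists>lam::real. 0 < lam \<and> lam \<le> 0.999904
         \<and> mina_map ` {0<..} = {lam .. 1/lam}
         \<and> lam = Inf {mina_margin m n | a b m n. abmn_positive a b m n \<and> has_limits m n})"
proof -
  have M: "\<And>x. x \<in> {0<..} \<Longrightarrow> mina_map x = Fm x" using mina_map_Fm by simp
  have P1: "\<forall>x>0. mina_map (sfun x) = mina_map x"
    using M sfun_pos Fm_shift by simp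
  have "continuous_on {0<..} mina_map = continuous_on {0<..} Fm"
    by (rule continuous_on_cong) (auto simp: M)
  hence P2: "continuous_on {0<..} mina_map" using Fm_cont by simp
  have PCe: "(\<lambda>k. prodZ (\<lambda>i. c_iter i x - 1) k) = PC x" for x unfolding PC_def by simp
  have PDe: "(\<lambda>k. prodZ (\<lambda>i. d_iter i x - 1) k) = PD x" for x unfolding PD_def by simp
  have P3: "\<forall>x>0. (\<lambda>k. prodZ (\<lambda>i. c_iter i x - 1) k) summable_on (UNIV::int set)
            \<and> (\<lambda>k. prodZ (\<lambda>i. d_iter i x - 1) k) summable_on (UNIV::int set)
            \<and> mina_map x = inverse (\<Sum>\<^sub>\<infinity>k\<in>(UNIV::int set). prodZ (\<lambda>i. c_iter i x - 1) k)
                 * x * (\<Sum>\<^sub>\<infinity>k\<in>(UNIV::int set). prodZ (\<lambda>i. d_iter i x - 1) k)"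
  proof (intro allI impI conjI)
    fix x :: real assume x: "x > 0"
    show "(\<lambda>k. prodZ (\<lambda>i. c_iter i x - 1) k) summable_on UNIV"
      unfolding PCe using PC_summable(3)[OF x] by (auto simp: summable_on_def)
    show "(\<lambda>k. prodZ (\<lambda>i. d_iter i x - 1) k) summable_on UNIV"
      unfolding PDe using PD_summable(3)[OF x] by (auto simp: summable_on_def)
    show "mina_map x = inverse (\<Sum>\<^sub>\<infinity>k\<in>(UNIV::int set). prodZ (\<lambda>i. c_iter i x - 1) k)
                 * x * (\<Sum>\<^sub>\<infinity>k\<in>(UNIV::int set). prodZ (\<lambda>i. d_iter i x - 1) k)"
      using mina_map_Fm[OF x] unfolding Fm_def Cs_def Ds_def PC_def PD_def by simp
  qed
  obtain lam where lam: "0 < lam" "Fm ` {0<..} = {lam .. 1/lam}" "\<forall>x>0. lam \<le> Fm x"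
    using image_interval[OF Fm_cont] by blast
  have l1: "lam \<le> 0.999904" using lam(3) Fm_X0 X0pos by (meson order_trans)
  have img: "mina_map ` {0<..} = Fm ` {0<..}" by (rule image_cong) (auto simp: M)
  have "lam \<le> 1" using l1 by simp
  hence "lam * lam \<le> 1" using lam(1) by (simp add: mult_le_one)
  hence le: "lam \<le> 1/lam" using lam(1) by (simp add: field_simps)
  have "Inf {mina_margin m n | a b m n. abmn_positive a b m n \<and> has_limits m n} = lam"
    unfolding margins_set lam(2) using le by simp
  hence P4: "\<exists>lam::real. 0 < lam \<and> lam \<le> 0.999904
         \<and> mina_map ` {0<..} = {lam .. 1/lam}
         \<and> lam = Inf {mina_margin m n | a b m n. abmn_positive a b m n \<and> has_limits m n}"
    using lam l1 img by auto
  show ?thesis using P1 P2 P3 P4 by blast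
qed


end
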